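(* As formal series of linear operators on $\mathcal N_q^-$ (with $x^-_i(v)=\sum_m x^-_{i,m}v^{-m}$ acting by left multiplication), for all $1\le i,j,k,m\le N$: $$\Omega_{\psi_m}(u)x^-_i(v)=\delta_{i,m}\delta(v\gamma/u)+g_{i,m,q^{-1}}(v\gamma/u)\,x^-_i(v)\Omega_{\psi_m}(u),$$ $$\Omega_{\phi_m}(u)x^-_i(v)=\delta_{i,m}\delta(u\gamma/v)+g_{i,m}(u\gamma/v)\,x^-_i(v)\Omega_{\phi_m}(u),$$ $$(q^{(\alpha_j|\alpha_k)}u_1-u_2)\Omega_{\psi_j}(u_1)\Omega_{\psi_k}(u_2)=(u_1-q^{(\alpha_j|\alpha_k)}u_2)\Omega_{\psi_k}(u_2)\Omega_{\psi_j}(u_1),$$ $$(q^{(\alpha_j|\alpha_k)}u_1-u_2)\Omega_{\phi_j}(u_1)\Omega_{\phi_k}(u_2)=(u_1-q^{(\alpha_j|\alpha_k)}u_2)\Omega_{\phi_k}(u_2)\Omega_{\phi_j}(u_1),$$ $$(q^{(\alpha_j|\alpha_k)}\gamma^2u_1-u_2)\Omega_{\phi_j}(u_1)\Omega_{\psi_k}(u_2)=(\gamma^2u_1-q^{(\alpha_j|\alpha_k)}u_2)\Omega_{\psi_k}(u_2)\Omega_{\phi_j}(u_1).$$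
   Context: Let $\mathfrak g$ be a finite-dimensional complex simple Lie algebra of rank $N$ with simple roots $\alpha_1,\dots,\alpha_N$ and invariant form $(\cdot|\cdot)$; $U_q(\widehat{\mathfrak g})$ the untwisted quantum affine algebra over $\mathbb C(q^{1/2})$ in Drinfeld's realization with generators $x^\pm_{i,r}$, $h_{i,s}$, $K_i^{\pm1}$, $\gamma^{\pm1/2}$ (central), $D^{\pm1}$; the $x^-$ satisfy $x^-_{i,k+1}x^-_{j,l}-q^{-(\alpha_i|\alpha_j)}x^-_{j,l}x^-_{i,k+1}=q^{-(\alpha_i|\alpha_j)}x^-_{i,k}x^-_{j,l+1}-x^-_{j,l+1}x^-_{i,k}$. Let $\mathcal N_q^-$ be the subalgebra generated by $\gamma^{\pm1/2}$ and all $x^-_{i,l}$. Let $\delta(z)=\sum_{k\in\mathbb Z}z^k$; let $g_{ij}(t)$ be the Taylor series at $t=0$ of $(q^{(\alpha_i|\alpha_j)}t-1)/(t-q^{(\alpha_i|\alpha_j)})$ and $g_{ij,q^{-1}}(t)$ the same with $q$ replaced by $q^{-1}$. Put $x^-_i(v)=\sum_{m}x^-_{i,m}v^{-m}$. Operators $\Omega_{\psi_i}(l),\Omega_{\phi_i}(l):\mathcal N_q^-\to\mathcal N_q^-$ ($l\in\mathbb Z$, $1\le i\le N$), with generating series $\Omega_{\psi_i}(u)=\sum_l\Omega_{\psi_i}(l)u^{-l}$, $\Omega_{\phi_i}(u)=\sum_l\Omega_{\phi_i}(l)u^{-l}$, are defined as follows: they commute with multiplication by $\gamma^{\pm1/2}$,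 kill $1$, and for $\bar P=x^-_{j_1}(v_1)\cdots x^-_{j_k}(v_k)$ (a generating series whose coefficients are the monomials $x^-_{j_1,n_1}\cdots x^-_{j_k,n_k}$), with $\bar P_l$ the product with the $l$-th factor omitted, $\Omega_{\psi_i}(u)(\bar P)=\sum_{l=1}^k\delta_{i,j_l}\prod_{m=1}^{l-1}g_{i,j_m,q^{-1}}(v_m/v_l)\,\bar P_l\,\delta(u/v_l\gamma)$ and $\Omega_{\phi_i}(u)(\bar P)=\sum_{l=1}^k\delta_{i,j_l}\prod_{m=1}^{l-1}g_{i,j_m}(v_l/v_m)\,\bar P_l\,\delta(u\gamma/v_l)$. *)

theory Defs
  imports "HOL-Computational_Algebra.Polynomial"
          "HOL-Computational_Algebra.Fraction_Field"
          "HOL-Computational_Algebra.Formal_Power_Series"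
          "HOL-Combinatorics.Permutations"
begin

text \<open>B i j stands for the invariant form value (alpha_i | alpha_j), i, j in {1..N},
  normalized so that short simple roots have squared length 2.  The conditions below
  (symmetric, positive definite, generalized-Cartan integrality, indecomposable) say
  exactly that B is the normalized symmetrized Cartan matrix of a finite-dimensional
  complex simple Lie algebra of rank N.\<close>

definition simple_form :: "nat \<Rightarrow> (nat \<Rightarrow> nat \<Rightarrow> int) \<Rightarrow> bool" where
  "simple_form N B \<longleftrightarrow>
     N \<ge> 1 \<and>
     (\<forall>i\<in>{1..N}. \<forall>j\<in>{1..N}. B i j = B j i) \<and>
     (\<forall>i\<in>{1..N}. B i i > 0 \<and> even (B i i)) \<and>
     (\<exists>i\<in>{1..N}. B i i = 2) \<and>
     (\<forall>i\<in>{1..N}. \<forall>j\<in>{1..N}. i \<noteq> j \<longrightarrow> B i j \<le> 0 \<and> B i i dvd 2 * B i j) \<and>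
     (\<forall>x :: nat \<Rightarrow> real. (\<exists>i\<in>{1..N}. x i \<noteq> 0) \<longrightarrow>
         (\<Sum>i=1..N. \<Sum>j=1..N. x i * of_int (B i j) * x j) > 0) \<and>
     (\<forall>S. S \<subseteq> {1..N} \<and> S \<noteq> {} \<and> S \<noteq> {1..N} \<longrightarrow>
         (\<exists>i\<in>S. \<exists>j\<in>{1..N} - S. B i j \<noteq> 0))"

definition cartan :: "(nat \<Rightarrow> nat \<Rightarrow> int) \<Rightarrow> nat \<Rightarrow> nat \<Rightarrow> int" where
  "cartan B i j = (2 * B i j) div B i i"

type_synonym F = "complex poly fract"

definition qh :: F where "qh = Fract [:0, 1:] 1"     \<comment> \<open>q^(1/2)\<close>
definition qq :: F where "qq = qh ^ 2"
definition qpow :: "int \<Rightarrow> F" where "qpow n = qq powi n"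
definition qi :: "(nat \<Rightarrow> nat \<Rightarrow> int) \<Rightarrow> nat \<Rightarrow> F" where
  "qi B i = qh powi (B i i)"

definition qint :: "F \<Rightarrow> int \<Rightarrow> F" where
  "qint t n = (t powi n - t powi (- n)) / (t - inverse t)"
definition qfact :: "F \<Rightarrow> nat \<Rightarrow> F" where
  "qfact t n = (\<Prod>k\<in>{1..n}. qint t (int k))"
definition qbin :: "F \<Rightarrow> nat \<Rightarrow> nat \<Rightarrow> F" where
  "qbin t m k = qfact t m / (qfact t k * qfact t (m - k))"

text \<open>Taylor coefficients at t = 0 of (Q t - 1)/(t - Q); with Q = q^((alpha_i|alpha_j)) this is
  g_ij, with Q = q^(-(alpha_i|alpha_j)) it is g_{ij,q^{-1}}.\<close>
definition gser :: "F \<Rightarrow> F fps" where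
  "gser Q = (fps_const Q * fps_X - 1) * inverse (fps_X - fps_const Q)"
definition gcoef :: "F \<Rightarrow> nat \<Rightarrow> F" where
  "gcoef Q n = fps_nth (gser Q) n"

datatype gen = Xp nat int | Xm nat int | Hg nat int | Kg nat | Kinv nat
  | Gh | Ghinv | Dg | Dinv
  \<comment> \<open>x^+_{i,r}, x^-_{i,r}, h_{i,s}, K_i, K_i^{-1}, gamma^{1/2}, gamma^{-1/2}, D, D^{-1}\<close>

fun valid_gen :: "nat \<Rightarrow> gen \<Rightarrow> bool" where
  "valid_gen N (Xp i r) = (i \<in> {1..N})"
| "valid_gen N (Xm i r) = (i \<in> {1..N})"
| "valid_gen N (Hg i s) = (i \<in> {1..N} \<and> s \<noteq> 0)"
| "valid_gen N (Kg i) = (i \<in> {1..N})"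
| "valid_gen N (Kinv i) = (i \<in> {1..N})"
| "valid_gen N _ = True"

text \<open>Elements of the free associative algebra over F: finitely supported functions on words.
  The product is concatenation convolution.\<close>
type_synonym elt = "gen list \<Rightarrow> F"

definition mon :: "gen list \<Rightarrow> elt" where "mon w = (\<lambda>v. if v = w then 1 else 0)"
definition fzero :: elt where "fzero = (\<lambda>_. 0)"
definition fone :: elt where "fone = mon []"
definition fadd :: "elt \<Rightarrow> elt \<Rightarrow> elt" where "fadd p q = (\<lambda>w. p w + q w)"
definition fsub :: "elt \<Rightarrow> elt \<Rightarrow> elt" where "fsub p q = (\<lambda>w. p w - q w)"
definition fsmul :: "F \<Rightarrow> elt \<Rightarrow> elt" where "fsmul c p = (\<lambda>w. c * p w)"
definition fmul :: "elt \<Rightarrow> elt \<Rightarrow> elt" where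
  "fmul p q = (\<lambda>w. \<Sum>i\<in>{0..length w}. p (take i w) * q (drop i w))"
definition fsum :: "('a \<Rightarrow> elt) \<Rightarrow> 'a set \<Rightarrow> elt" where
  "fsum f A = (\<lambda>w. \<Sum>x\<in>A. f x w)"
definition fprod :: "elt list \<Rightarrow> elt" where "fprod ps = foldr fmul ps fone"
definition fpow :: "elt \<Rightarrow> nat \<Rightarrow> elt" where "fpow p n = (fmul p ^^ n) fone"
definition gn :: "gen \<Rightarrow> elt" where "gn g = mon [g]"
definition comm :: "elt \<Rightarrow> elt \<Rightarrow> elt" where "comm a b = fsub (fmul a b) (fmul b a)"

definition xp :: "nat \<Rightarrow> int \<Rightarrow> elt" where "xp i r = gn (Xp i r)"
definition xm :: "nat \<Rightarrow> int \<Rightarrow> elt" where "xm i r = gn (Xm i r)"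

text \<open>gpow k = (gamma^{1/2})^k, k an integer; so gamma^n = gpow (2 n).\<close>
definition gpow :: "int \<Rightarrow> elt" where
  "gpow k = (if k \<ge> 0 then fpow (gn Gh) (nat k) else fpow (gn Ghinv) (nat (- k)))"

text \<open>Coefficient of z^r in exp(c * sum_{k>=1} A_k z^k), computed in formal power series
  over the free algebra.\<close>
definition comps_list :: "nat \<Rightarrow> nat list set" where
  "comps_list r = {ks. (\<forall>k\<in>set ks. k \<ge> 1) \<and> sum_list ks = r}"
definition expc :: "F \<Rightarrow> (nat \<Rightarrow> elt) \<Rightarrow> nat \<Rightarrow> elt" where
  "expc c A r = fsum (\<lambda>ks. fsmul (c ^ length ks / of_nat (fact (length ks))) (fprod (map A ks)))
                     (comps_list r)"

text \<open>psi_i(z) = sum_{r>=0} psi_{i,r} z^{-r} = K_i exp((q_i - q_i^{-1}) sum_{k>0} h_{i,k} z^{-k}),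
  phi_i(z) = sum_{r>=0} phi_{i,-r} z^{r} = K_i^{-1} exp(-(q_i - q_i^{-1}) sum_{k>0} h_{i,-k} z^{k}).\<close>
definition psi :: "(nat \<Rightarrow> nat \<Rightarrow> int) \<Rightarrow> nat \<Rightarrow> int \<Rightarrow> elt" where
  "psi B i r = (if r < 0 then fzero else
     fmul (gn (Kg i)) (expc (qi B i - inverse (qi B i)) (\<lambda>k. gn (Hg i (int k))) (nat r)))"
definition phi :: "(nat \<Rightarrow> nat \<Rightarrow> int) \<Rightarrow> nat \<Rightarrow> int \<Rightarrow> elt" where
  "phi B i r = (if r > 0 then fzero else
     fmul (gn (Kinv i)) (expc (- (qi B i - inverse (qi B i))) (\<lambda>k. gn (Hg i (- int k))) (nat (- r))))"

definition serre_elt :: "(nat \<Rightarrow> nat \<Rightarrow> int) \<Rightarrow> (nat \<Rightarrow> int \<Rightarrow> elt) \<Rightarrow> nat \<Rightarrow> nat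
    \<Rightarrow> (nat \<Rightarrow> int) \<Rightarrow> int \<Rightarrow> elt" where
  "serre_elt B x i j rs l =
     (let m = nat (1 - cartan B i j) in
      fsum (\<lambda>\<sigma>. fsum (\<lambda>k. fsmul ((-1) ^ k * qbin (qi B i) m k)
                 (fprod (map (\<lambda>t. x i (rs (\<sigma> t))) [0..<k] @ [x j l]
                         @ map (\<lambda>t. x i (rs (\<sigma> t))) [k..<m]))) {0..m})
           {\<sigma>. \<sigma> permutes {..<m}})"

definition rels :: "nat \<Rightarrow> (nat \<Rightarrow> nat \<Rightarrow> int) \<Rightarrow> elt set" where
  "rels N B =
     \<comment> \<open>gamma^{1/2} central and invertible\<close>
     {comm (gn Gh) (gn g) | g. valid_gen N g}
   \<union> {fsub (fmul (gn Gh) (gn Ghinv)) fone, fsub (fmul (gn Ghinv) (gn Gh)) fone}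
     \<comment> \<open>K_i, D invertible; K's commute with each other, with D and with h's\<close>
   \<union> {fsub (fmul (gn (Kg i)) (gn (Kinv i))) fone | i. i \<in> {1..N}}
   \<union> {fsub (fmul (gn (Kinv i)) (gn (Kg i))) fone | i. i \<in> {1..N}}
   \<union> {fsub (fmul (gn Dg) (gn Dinv)) fone, fsub (fmul (gn Dinv) (gn Dg)) fone}
   \<union> {comm (gn (Kg i)) (gn (Kg j)) | i j. i \<in> {1..N} \<and> j \<in> {1..N}}
   \<union> {comm (gn (Kg i)) (gn Dg) | i. i \<in> {1..N}}
   \<union> {comm (gn (Kg i)) (gn (Hg j s)) | i j s. i \<in> {1..N} \<and> j \<in> {1..N} \<and> s \<noteq> 0}
     \<comment> \<open>D x^{+-}_{i,k} D^{-1} = q^k x^{+-}_{i,k},  D h_{i,k} D^{-1} = q^k h_{i,k}\<close>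
   \<union> {fsub (fprod [gn Dg, gn g, gn Dinv]) (fsmul (qpow k) (gn g)) | g i k.
        i \<in> {1..N} \<and> (g = Xp i k \<or> g = Xm i k \<or> (g = Hg i k \<and> k \<noteq> 0))}
     \<comment> \<open>K_i x^{+-}_{j,k} K_i^{-1} = q^{+-(alpha_i|alpha_j)} x^{+-}_{j,k}\<close>
   \<union> {fsub (fprod [gn (Kg i), xp j k, gn (Kinv i)]) (fsmul (qpow (B i j)) (xp j k)) | i j k.
        i \<in> {1..N} \<and> j \<in> {1..N}}
   \<union> {fsub (fprod [gn (Kg i), xm j k, gn (Kinv i)]) (fsmul (qpow (- B i j)) (xm j k)) | i j k.
        i \<in> {1..N} \<and> j \<in> {1..N}}
     \<comment> \<open>[h_{i,k}, h_{j,l}] = delta_{k+l,0} [k a_ij]_{q_i}/k (gamma^k - gamma^{-k})/(q_j - q_j^{-1})\<close>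
   \<union> {fsub (comm (gn (Hg i k)) (gn (Hg j l)))
          (if k + l = 0 then
             fsmul ((qpow (k * B i j) - qpow (- k * B i j)) /
                    (of_int k * (qi B i - inverse (qi B i)) * (qi B j - inverse (qi B j))))
                   (fsub (gpow (2 * k)) (gpow (- 2 * k)))
           else fzero) | i j k l. i \<in> {1..N} \<and> j \<in> {1..N} \<and> k \<noteq> 0 \<and> l \<noteq> 0}
     \<comment> \<open>[h_{i,k}, x^{+-}_{j,l}] = +- [k a_ij]_{q_i}/k gamma^{-+|k|/2} x^{+-}_{j,k+l}\<close>
   \<union> {fsub (comm (gn (Hg i k)) (xp j l))
          (fsmul ((qpow (k * B i j) - qpow (- k * B i j)) / (of_int k * (qi B i - inverse (qi B i))))
                 (fmul (gpow (- \<bar>k\<bar>)) (xp j (k + l))))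
        | i j k l. i \<in> {1..N} \<and> j \<in> {1..N} \<and> k \<noteq> 0}
   \<union> {fsub (comm (gn (Hg i k)) (xm j l))
          (fsmul (- ((qpow (k * B i j) - qpow (- k * B i j)) / (of_int k * (qi B i - inverse (qi B i)))))
                 (fmul (gpow \<bar>k\<bar>) (xm j (k + l))))
        | i j k l. i \<in> {1..N} \<and> j \<in> {1..N} \<and> k \<noteq> 0}
     \<comment> \<open>x^{+-}_{i,k+1} x^{+-}_{j,l} - q^{+-(ai|aj)} x^{+-}_{j,l} x^{+-}_{i,k+1}
         = q^{+-(ai|aj)} x^{+-}_{i,k} x^{+-}_{j,l+1} - x^{+-}_{j,l+1} x^{+-}_{i,k}\<close>
   \<union> {fsub (fsub (fmul (xp i (k + 1)) (xp j l)) (fsmul (qpow (B i j)) (fmul (xp j l) (xp i (k + 1)))))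
          (fsub (fsmul (qpow (B i j)) (fmul (xp i k) (xp j (l + 1)))) (fmul (xp j (l + 1)) (xp i k)))
        | i j k l. i \<in> {1..N} \<and> j \<in> {1..N}}
   \<union> {fsub (fsub (fmul (xm i (k + 1)) (xm j l)) (fsmul (qpow (- B i j)) (fmul (xm j l) (xm i (k + 1)))))
          (fsub (fsmul (qpow (- B i j)) (fmul (xm i k) (xm j (l + 1)))) (fmul (xm j (l + 1)) (xm i k)))
        | i j k l. i \<in> {1..N} \<and> j \<in> {1..N}}
     \<comment> \<open>[x^+_{i,k}, x^-_{j,l}] = delta_ij (gamma^{(k-l)/2} psi_{i,k+l} - gamma^{(l-k)/2} phi_{i,k+l})/(q_i - q_i^{-1})\<close>
   \<union> {fsub (comm (xp i k) (xm j l))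
          (if i = j then
             fsmul (inverse (qi B i - inverse (qi B i)))
               (fsub (fmul (gpow (k - l)) (psi B i (k + l))) (fmul (gpow (l - k)) (phi B i (k + l))))
           else fzero) | i j k l. i \<in> {1..N} \<and> j \<in> {1..N}}
     \<comment> \<open>Serre relations, i ~= j, m = 1 - a_ij\<close>
   \<union> {serre_elt B xp i j rs l | i j rs l. i \<in> {1..N} \<and> j \<in> {1..N} \<and> i \<noteq> j}
   \<union> {serre_elt B xm i j rs l | i j rs l. i \<in> {1..N} \<and> j \<in> {1..N} \<and> i \<noteq> j}"

inductive_set rel_ideal :: "nat \<Rightarrow> (nat \<Rightarrow> nat \<Rightarrow> int) \<Rightarrow> elt set" for N B where
  gen: "r \<in> rels N B \<Longrightarrow> r \<in> rel_ideal N B"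
| zero: "fzero \<in> rel_ideal N B"
| add: "a \<in> rel_ideal N B \<Longrightarrow> b \<in> rel_ideal N B \<Longrightarrow> fadd a b \<in> rel_ideal N B"
| smul: "a \<in> rel_ideal N B \<Longrightarrow> fsmul c a \<in> rel_ideal N B"
| lmul: "a \<in> rel_ideal N B \<Longrightarrow> valid_gen N g \<Longrightarrow> fmul (gn g) a \<in> rel_ideal N B"
| rmul: "a \<in> rel_ideal N B \<Longrightarrow> valid_gen N g \<Longrightarrow> fmul a (gn g) \<in> rel_ideal N B"

definition ueq :: "nat \<Rightarrow> (nat \<Rightarrow> nat \<Rightarrow> int) \<Rightarrow> elt \<Rightarrow> elt \<Rightarrow> bool" where
  "ueq N B a b \<longleftrightarrow> fsub a b \<in> rel_ideal N B"

definition nword :: "nat \<Rightarrow> gen list \<Rightarrow> bool" where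
  "nword N w \<longleftrightarrow> (\<forall>g\<in>set w. g = Gh \<or> g = Ghinv \<or> (\<exists>i l. g = Xm i l \<and> i \<in> {1..N}))"

text \<open>Free-algebra representatives of elements of N_q^-: linear combinations of words in
  gamma^{+-1/2} and the x^-_{i,l}.\<close>
definition nsub :: "nat \<Rightarrow> elt set" where
  "nsub N = {p. finite {w. p w \<noteq> 0} \<and> (\<forall>w. p w \<noteq> 0 \<longrightarrow> nword N w)}"

fun gexp :: "gen list \<Rightarrow> int" where
  "gexp [] = 0"
| "gexp (Gh # w) = gexp w + 1"
| "gexp (Ghinv # w) = gexp w - 1"
| "gexp (_ # w) = gexp w"

fun xpart :: "gen list \<Rightarrow> (nat \<times> int) list" where
  "xpart [] = []"
| "xpart (Xm i l # w) = (i, l) # xpart w"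
| "xpart (_ # w) = xpart w"

definition xmon :: "(nat \<times> int) list \<Rightarrow> elt" where
  "xmon xs = mon (map (\<lambda>(i, l). Xm i l) xs)"

definition comps_fun :: "nat \<Rightarrow> int \<Rightarrow> (nat \<Rightarrow> nat) set" where
  "comps_fun p s = {a. (\<forall>m\<ge>p. a m = 0) \<and> int (\<Sum>m<p. a m) = s}"

text \<open>Coefficient of u^{-r} of Omega_{psi_i}(u), applied to x^-_{j_1,n_1}...x^-_{j_k,n_k}
  (extracted from the defining generating-series formula).\<close>
definition om_psi_mon :: "(nat \<Rightarrow> nat \<Rightarrow> int) \<Rightarrow> nat \<Rightarrow> int \<Rightarrow> (nat \<times> int) list \<Rightarrow> elt" where
  "om_psi_mon B i r xs =
     fsum (\<lambda>p. if fst (xs ! p) = i then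
        fmul (gpow (2 * r))
          (fsum (\<lambda>a. fsmul (\<Prod>m<p. gcoef (qpow (- B i (fst (xs ! m)))) (a m))
                    (xmon (map (\<lambda>m. (fst (xs ! m), snd (xs ! m) + int (a m)))
                               (filter (\<lambda>m. m \<noteq> p) [0..<length xs]))))
                (comps_fun p (snd (xs ! p) + r)))
      else fzero) {..<length xs}"

definition om_phi_mon :: "(nat \<Rightarrow> nat \<Rightarrow> int) \<Rightarrow> nat \<Rightarrow> int \<Rightarrow> (nat \<times> int) list \<Rightarrow> elt" where
  "om_phi_mon B i r xs =
     fsum (\<lambda>p. if fst (xs ! p) = i then
        fmul (gpow (- 2 * r))
          (fsum (\<lambda>a. fsmul (\<Prod>m<p. gcoef (qpow (B i (fst (xs ! m)))) (a m))
                    (xmon (map (\<lambda>m. (fst (xs ! m), snd (xs ! m) - int (a m)))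
                               (filter (\<lambda>m. m \<noteq> p) [0..<length xs]))))
                (comps_fun p (- snd (xs ! p) - r)))
      else fzero) {..<length xs}"

text \<open>Linear extension of an operator on words; on words, Omega commutes with gamma^{+-1/2}.\<close>
definition linext :: "(gen list \<Rightarrow> elt) \<Rightarrow> elt \<Rightarrow> elt" where
  "linext f p = fsum (\<lambda>w. fsmul (p w) (f w)) {w. p w \<noteq> 0}"

definition OmPsi :: "(nat \<Rightarrow> nat \<Rightarrow> int) \<Rightarrow> nat \<Rightarrow> int \<Rightarrow> elt \<Rightarrow> elt" where
  "OmPsi B i r = linext (\<lambda>w. fmul (gpow (gexp w)) (om_psi_mon B i r (xpart w)))"
definition OmPhi :: "(nat \<Rightarrow> nat \<Rightarrow> int) \<Rightarrow> nat \<Rightarrow> int \<Rightarrow> elt \<Rightarrow> elt" where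
  "OmPhi B i r = linext (\<lambda>w. fmul (gpow (gexp w)) (om_phi_mon B i r (xpart w)))"

end

theory Submission
  imports Defs "HOL-Library.Poly_Mapping"
begin


section \<open>Finitely supported vectors\<close>

abbreviation lk where "lk \<equiv> Poly_Mapping.lookup"
abbreviation ks where "ks \<equiv> Poly_Mapping.keys"
abbreviation sg where "sg \<equiv> Poly_Mapping.single"

definition sc :: "F \<Rightarrow> ('k \<Rightarrow>\<^sub>0 F) \<Rightarrow> ('k \<Rightarrow>\<^sub>0 F)" where
  "sc c v = Poly_Mapping.map (\<lambda>x. c * x) v"

lemma lookup_sc [simp]: "lk (sc c v) k = c * lk v k"
  by (simp add: sc_def map.rep_eq when_def)

lemma sc_add: "sc c (v + w) = sc c v + sc c w"
  by (rule poly_mapping_eqI) (simp add: lookup_add algebra_simps)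
lemma sc_diff: "sc c (v - w) = sc c v - sc c w"
  by (rule poly_mapping_eqI) (simp add: lookup_minus algebra_simps)
lemma sc_zero [simp]: "sc c 0 = 0"
  by (rule poly_mapping_eqI) simp
lemma sc_0 [simp]: "sc 0 v = 0"
  by (rule poly_mapping_eqI) simp
lemma sc_1 [simp]: "sc 1 v = v"
  by (rule poly_mapping_eqI) simp
lemma sc_sc [simp]: "sc c (sc d v) = sc (c * d) v"
  by (rule poly_mapping_eqI) simp
lemma sc_addc: "sc (c + d) v = sc c v + sc d v"
  by (rule poly_mapping_eqI) (simp add: lookup_add algebra_simps)
lemma sc_diffc: "sc (c - d) v = sc c v - sc d v"
  by (rule poly_mapping_eqI) (simp add: lookup_minus algebra_simps)
lemma sc_sum: "sc c (sum f A) = (\<Sum>a\<in>A. sc c (f a))"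
  by (rule poly_mapping_eqI) (simp add: lookup_sum sum_distrib_left)
lemma sc_sumc: "sc (sum f A) v = (\<Sum>a\<in>A. sc (f a) v)"
  by (rule poly_mapping_eqI) (simp add: lookup_sum sum_distrib_right)
lemma sc_single: "sc c (sg k d) = sg k (c * d)"
  by (rule poly_mapping_eqI) (simp add: lookup_single when_def)
lemma sc_uminus: "sc c (- v) = - sc c v"
  by (rule poly_mapping_eqI) simp

definition ext :: "('k \<Rightarrow> 'j \<Rightarrow>\<^sub>0 F) \<Rightarrow> ('k \<Rightarrow>\<^sub>0 F) \<Rightarrow> ('j \<Rightarrow>\<^sub>0 F)" where
  "ext f v = (\<Sum>k\<in>ks v. sc (lk v k) (f k))"

lemma ext_sup:
  assumes "finite S" "ks v \<subseteq> S"
  shows "ext f v = (\<Sum>k\<in>S. sc (lk v k) (f k))"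
  unfolding ext_def
  by (rule sum.mono_neutral_left) (use assms in \<open>auto simp: in_keys_iff\<close>)

lemma ext_add: "ext f (v + w) = ext f v + ext f w"
proof -
  let ?S = "ks v \<union> ks w"
  have "ext f (v + w) = (\<Sum>k\<in>?S. sc (lk (v + w) k) (f k))"
    by (rule ext_sup) (auto dest: subsetD[OF keys_add])
  also have "\<dots> = (\<Sum>k\<in>?S. sc (lk v k) (f k)) + (\<Sum>k\<in>?S. sc (lk w k) (f k))"
    by (simp add: lookup_add sc_addc sum.distrib)
  also have "\<dots> = ext f v + ext f w"
    by (simp add: ext_sup[symmetric])
  finally show ?thesis .
qed

lemma ext_zero [simp]: "ext f 0 = 0"
  by (simp add: ext_def)

lemma ext_sc: "ext f (sc c v) = sc c (ext f v)"
proof -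
  have "ext f (sc c v) = (\<Sum>k\<in>ks v. sc (lk (sc c v) k) (f k))"
    by (rule ext_sup) (auto simp: in_keys_iff)
  then show ?thesis by (simp add: ext_def sc_sum)
qed

lemma ext_uminus: "ext f (- v) = - ext f v"
  using ext_add[of f v "- v"] by (simp add: eq_neg_iff_add_eq_0 add.commute)

lemma ext_diff: "ext f (v - w) = ext f v - ext f w"
  using ext_add[of f v "- w"] by (simp add: ext_uminus)

lemma ext_sum: "ext f (sum g A) = (\<Sum>a\<in>A. ext f (g a))"
  by (induction A rule: infinite_finite_induct) (auto simp: ext_add)

lemma ext_single [simp]: "ext f (sg k c) = sc c (f k)"
  by (simp add: ext_def)

lemma ext_ext: "ext f (ext g v) = ext (\<lambda>k. ext f (g k)) v"
proof -
  have "ext f (ext g v) = ext f (\<Sum>k\<in>ks v. sc (lk v k) (g k))" by (simp only: ext_def)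
  also have "\<dots> = (\<Sum>k\<in>ks v. sc (lk v k) (ext f (g k)))" by (simp add: ext_sum ext_sc)
  also have "\<dots> = ext (\<lambda>k. ext f (g k)) v" by (simp only: ext_def)
  finally show ?thesis .
qed

lemma ext_cong: "(\<And>k. k \<in> ks v \<Longrightarrow> f k = g k) \<Longrightarrow> ext f v = ext g v"
  by (simp add: ext_def)

lemma ext_basis: "ext (\<lambda>k. sg k 1) v = v"
proof (rule poly_mapping_eqI)
  fix k
  have "lk (ext (\<lambda>k. sg k 1) v) k = (\<Sum>x\<in>ks v. lk v x * (1 when x = k))"
    by (simp add: ext_def lookup_sum lookup_single)
  also have "\<dots> = lk v k"
    by (cases "k \<in> ks v") (auto simp: when_def in_keys_iff if_distrib sum.delta' cong: if_cong
          intro!: sum.neutral)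
  finally show "lk (ext (\<lambda>k. sg k 1) v) k = lk v k" .
qed


definition fin :: "elt \<Rightarrow> bool" where "fin X \<longleftrightarrow> finite {w. X w \<noteq> 0}"
definition nws :: "nat \<Rightarrow> elt \<Rightarrow> bool" where "nws N X \<longleftrightarrow> (\<forall>w. X w \<noteq> 0 \<longrightarrow> nword N w)"
definition good :: "nat \<Rightarrow> elt \<Rightarrow> bool" where "good N X \<longleftrightarrow> fin X \<and> nws N X"

lemma fmul_mon_left:
  "fmul (mon u) Y = (\<lambda>x. if take (length u) x = u then Y (drop (length u) x) else 0)"
proof (rule ext)
  fix x
  show "fmul (mon u) Y x = (if take (length u) x = u then Y (drop (length u) x) else 0)"
  proof (cases "take (length u) x = u")
    case True
    then have le: "length u \<le> length x" by (metis length_take min.absorb_iff1 nat_le_linear)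
    have "fmul (mon u) Y x = (\<Sum>i\<in>{0..length x}. if i = length u then Y (drop (length u) x) else 0)"
      unfolding fmul_def mon_def
      by (rule sum.cong) (use True le in \<open>auto simp: min_def split: if_splits\<close>)
    also have "\<dots> = Y (drop (length u) x)" using le by simp
    finally show ?thesis using True by simp
  next
    case False
    have "fmul (mon u) Y x = 0"
      unfolding fmul_def mon_def
    proof (rule sum.neutral, intro ballI)
      fix i assume i: "i \<in> {0..length x}"
      have "take i x \<noteq> u"
      proof
        assume h: "take i x = u"
        then have "length u = i" using i by auto
        then show False using h False by simp
      qed
      then show "(if take i x = u then 1 else 0) * Y (drop i x) = 0" by simp
    qed
    then show ?thesis using False by simp
  qed
qed

lemma fmul_mon_right:
  "fmul Y (mon v) = (\<lambda>x. if length v \<le> length x \<and> drop (length x - length v) x = v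
       then Y (take (length x - length v) x) else 0)"
proof (rule ext)
  fix x
  show "fmul Y (mon v) x = (if length v \<le> length x \<and> drop (length x - length v) x = v
       then Y (take (length x - length v) x) else 0)"
  proof (cases "length v \<le> length x \<and> drop (length x - length v) x = v")
    case True
    have "fmul Y (mon v) x = (\<Sum>i\<in>{0..length x}. if i = length x - length v then Y (take (length x - length v) x) else 0)"
      unfolding fmul_def mon_def
      by (rule sum.cong) (use True in \<open>auto simp: min_def split: if_splits\<close>)
    also have "\<dots> = Y (take (length x - length v) x)" by simp
    finally show ?thesis using True by simp
  next
    case False
    have "fmul Y (mon v) x = 0"
      unfolding fmul_def mon_def
    proof (rule sum.neutral, intro ballI)
      fix i assume i: "i \<in> {0..length x}"
      have "drop i x \<noteq> v"
      proof
        assume h: "drop i x = v"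
        then have "length v = length x - i" by auto
        then show False using h False i by auto
      qed
      then show "Y (take i x) * (if drop i x = v then 1 else 0) = 0" by simp
    qed
    then show ?thesis by (simp only: if_not_P[OF False])
  qed
qed

lemma fmul_fone_right [simp]: "fmul Y fone = Y"
  by (rule ext) (simp add: fone_def fmul_mon_right)

lemma fmul_fone_left [simp]: "fmul fone Y = Y"
  by (rule ext) (simp add: fone_def fmul_mon_left)

lemma take_eq_len: "take n x = u \<Longrightarrow> length u = n \<Longrightarrow> n \<le> length x"
  by auto

lemma mon_mul: "fmul (mon u) (mon v) = mon (u @ v)"
proof (rule ext)
  fix x :: "gen list"
  show "fmul (mon u) (mon v) x = mon (u @ v) x"
  proof (cases "x = u @ v")
    case True then show ?thesis by (simp add: fmul_mon_left) (simp add: mon_def)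
  next
    case False
    have "\<not> (take (length u) x = u \<and> drop (length u) x = v)"
      using False by (metis append_take_drop_id)
    then show ?thesis using False by (simp add: fmul_mon_left) (auto simp: mon_def)
  qed
qed

lemma fmul_mon_mon_left: "fmul (mon u) (fmul (mon v) Y) = fmul (mon (u @ v)) Y"
proof (rule ext)
  fix x :: "gen list"
  show "fmul (mon u) (fmul (mon v) Y) x = fmul (mon (u @ v)) Y x"
  proof (cases "take (length u) x = u \<and> take (length v) (drop (length u) x) = v")
    case True
    have "take (length (u @ v)) x = u @ v" using True by (simp add: take_add)
    then show ?thesis using True by (simp add: fmul_mon_left add.commute)
  next
    case False
    have "take (length (u @ v)) x \<noteq> u @ v"
    proof
      assume h: "take (length (u @ v)) x = u @ v"
      then have "length (u @ v) \<le> length x" by (rule take_eq_len) simp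
      then have "take (length u) x = u" using h
        by (metis append_eq_conv_conj length_append take_add take_take min_def le_add1 length_take)
      moreover have "take (length v) (drop (length u) x) = v" using h
        by (metis append_eq_conv_conj length_append take_add length_take min_def calculation)
      ultimately show False using False by simp
    qed
    then show ?thesis using False by (auto simp add: fmul_mon_left)
  qed
qed

lemma fmul_mon_mon_right: "fmul (fmul Y (mon v)) (mon w) = fmul Y (mon (v @ w))"
proof (rule ext)
  fix x :: "gen list"
  define n where "n = length x"
  define m where "m = length w"
  define k where "k = length v"
  show "fmul (fmul Y (mon v)) (mon w) x = fmul Y (mon (v @ w)) x"
  proof (cases "k + m \<le> n \<and> drop (n - k - m) x = v @ w")
    case True
    have 1: "drop (n - m) x = w"
    proof -
      have e: "k + (n - k - m) = n - m" using True by simp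
      have "drop (n - m) x = drop k (drop (n - k - m) x)" by (simp only: drop_drop e)
      also have "\<dots> = w" using True k_def by simp
      finally show ?thesis .
    qed
    have 2: "drop (n - m - k) (take (n - m) x) = v"
    proof -
      have "drop (n - m - k) (take (n - m) x) = take k (drop (n - k - m) x)"
        using True by (simp add: drop_take diff_diff_left add.commute)
      also have "\<dots> = v" using True k_def by simp
      finally show ?thesis .
    qed
    have "k + m \<le> n \<longrightarrow> k \<le> n - m" by arith
    have 3: "take (n - m - k) (take (n - m) x) = take (n - k - m) x"
      by (simp add: diff_diff_left add.commute)
    have "fmul (fmul Y (mon v)) (mon w) x = Y (take (n - k - m) x)"
      using True 1 2 3 \<open>k + m \<le> n \<longrightarrow> k \<le> n - m\<close> by (simp add: fmul_mon_right n_def[symmetric] m_def[symmetric] k_def[symmetric])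
    moreover have "fmul Y (mon (v @ w)) x = Y (take (n - k - m) x)"
      using True by (simp add: fmul_mon_right n_def[symmetric] m_def[symmetric] k_def[symmetric] diff_diff_left)
    ultimately show ?thesis by simp
  next
    case False
    have "\<not> (m \<le> n \<and> drop (n - m) x = w \<and> k \<le> n - m \<and>
             drop (n - m - k) (take (n - m) x) = v)"
    proof
      assume h: "m \<le> n \<and> drop (n - m) x = w \<and> k \<le> n - m \<and>
             drop (n - m - k) (take (n - m) x) = v"
      have "drop (n - m - k) x = drop (n - m - k) (take (n - m) x @ drop (n - m) x)" by simp
      also have "\<dots> = drop (n - m - k) (take (n - m) x) @ drop (n - m) x"
        using h by (simp add: n_def)
      also have "\<dots> = v @ w" using h by simp
      finally have "drop (n - k - m) x = v @ w" by (simp add: diff_diff_left add.commute)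
      moreover have "k + m \<le> n" using h by arith
      ultimately show False using False by simp
    qed
    then have "fmul (fmul Y (mon v)) (mon w) x = 0"
      by (simp add: fmul_mon_right n_def[symmetric] m_def[symmetric] k_def[symmetric]) blast
    moreover have "fmul Y (mon (v @ w)) x = 0"
      using False by (simp add: fmul_mon_right n_def[symmetric] m_def[symmetric] k_def[symmetric] diff_diff_left add.commute) blast
    ultimately show ?thesis by simp
  qed
qed

lemma fpow_gn: "fpow (gn g) n = mon (replicate n g)"
  by (induction n) (simp_all add: fpow_def fone_def gn_def mon_mul)

definition gw :: "int \<Rightarrow> gen list" where
  "gw k = (if k \<ge> 0 then replicate (nat k) Gh else replicate (nat (- k)) Ghinv)"

lemma gpow_mon: "gpow k = mon (gw k)"
  by (simp add: gpow_def gw_def fpow_gn)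

lemma fadd_apply [simp]: "fadd X Y w = X w + Y w" by (simp add: fadd_def)
lemma fsub_apply [simp]: "fsub X Y w = X w - Y w" by (simp add: fsub_def)
lemma fsmul_apply [simp]: "fsmul c X w = c * X w" by (simp add: fsmul_def)
lemma fsum_apply [simp]: "fsum f A w = (\<Sum>x\<in>A. f x w)" by (simp add: fsum_def)
lemma fzero_apply [simp]: "fzero w = 0" by (simp add: fzero_def)

lemma fmul_fadd_right: "fmul X (fadd Y Z) = fadd (fmul X Y) (fmul X Z)"
  by (rule ext) (simp add: fmul_def algebra_simps sum.distrib)
lemma fmul_fadd_left: "fmul (fadd Y Z) X = fadd (fmul Y X) (fmul Z X)"
  by (rule ext) (simp add: fmul_def algebra_simps sum.distrib)
lemma fmul_fsub_right: "fmul X (fsub Y Z) = fsub (fmul X Y) (fmul X Z)"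
  by (rule ext) (simp add: fmul_def algebra_simps sum_subtractf)
lemma fmul_fsub_left: "fmul (fsub Y Z) X = fsub (fmul Y X) (fmul Z X)"
  by (rule ext) (simp add: fmul_def algebra_simps sum_subtractf)
lemma fmul_fsmul_right: "fmul X (fsmul c Y) = fsmul c (fmul X Y)"
  by (rule ext) (simp add: fmul_def algebra_simps sum_distrib_left)
lemma fmul_fsmul_left: "fmul (fsmul c Y) X = fsmul c (fmul Y X)"
  by (rule ext) (simp add: fmul_def algebra_simps sum_distrib_left)
lemma fmul_fsum_right: "fmul X (fsum f A) = fsum (\<lambda>a. fmul X (f a)) A"
  by (rule ext) (simp add: fmul_def sum_distrib_left sum.swap[of _ A])
lemma fmul_fzero_right [simp]: "fmul X fzero = fzero"
  by (rule ext) (simp add: fmul_def)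
lemma fmul_fzero_left [simp]: "fmul fzero X = fzero"
  by (rule ext) (simp add: fmul_def)

lemma elt_decomp:
  assumes "fin X"
  shows "X = fsum (\<lambda>w. fsmul (X w) (mon w)) {w. X w \<noteq> 0}"
proof (rule ext)
  fix x
  have "(\<Sum>w\<in>{w. X w \<noteq> 0}. X w * mon w x) = (\<Sum>w\<in>{w. X w \<noteq> 0}. if w = x then X x else 0)"
    by (rule sum.cong) (auto simp: mon_def)
  also have "\<dots> = X x" using assms by (simp add: fin_def)
  finally show "X x = fsum (\<lambda>w. fsmul (X w) (mon w)) {w. X w \<noteq> 0} x" by simp
qed

lemma fmul_mon_left_dec:
  assumes "fin Y"
  shows "fmul (mon u) Y = fsum (\<lambda>w. fsmul (Y w) (mon (u @ w))) {w. Y w \<noteq> 0}"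
proof -
  have "fmul (mon u) Y = fmul (mon u) (fsum (\<lambda>w. fsmul (Y w) (mon w)) {w. Y w \<noteq> 0})"
    using elt_decomp[OF assms] by simp
  also have "\<dots> = fsum (\<lambda>w. fsmul (Y w) (mon (u @ w))) {w. Y w \<noteq> 0}"
    by (simp add: fmul_fsum_right fmul_fsmul_right mon_mul)
  finally show ?thesis .
qed

lemma fmul_dec:
  assumes "fin X"
  shows "fmul X Y = fsum (\<lambda>w. fsmul (X w) (fmul (mon w) Y)) {w. X w \<noteq> 0}"
proof -
  have "fmul X Y = fmul (fsum (\<lambda>w. fsmul (X w) (mon w)) {w. X w \<noteq> 0}) Y"
    using elt_decomp[OF assms] by simp
  also have "\<dots> = fsum (\<lambda>w. fsmul (X w) (fmul (mon w) Y)) {w. X w \<noteq> 0}"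
  proof (rule ext)
    fix x
    have "fmul (fsum (\<lambda>w. fsmul (X w) (mon w)) {w. X w \<noteq> 0}) Y x
        = (\<Sum>i\<in>{0..length x}. \<Sum>w\<in>{w. X w \<noteq> 0}. X w * (mon w (take i x) * Y (drop i x)))"
      by (simp add: fmul_def sum_distrib_right mult.assoc)
    also have "\<dots> = (\<Sum>w\<in>{w. X w \<noteq> 0}. \<Sum>i\<in>{0..length x}. X w * (mon w (take i x) * Y (drop i x)))"
      by (rule sum.swap)
    also have "\<dots> = fsum (\<lambda>w. fsmul (X w) (fmul (mon w) Y)) {w. X w \<noteq> 0} x"
      by (simp add: fmul_def sum_distrib_left)
    finally show "fmul (fsum (\<lambda>w. fsmul (X w) (mon w)) {w. X w \<noteq> 0}) Y x = fsum (\<lambda>w. fsmul (X w) (fmul (mon w) Y)) {w. X w \<noteq> 0} x" .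
  qed
  finally show ?thesis .
qed

lemma fin_mon [simp]: "fin (mon w)"
  by (simp add: fin_def mon_def)
lemma fin_fzero [simp]: "fin fzero" by (simp add: fin_def)
lemma fin_fadd: "fin X \<Longrightarrow> fin Y \<Longrightarrow> fin (fadd X Y)"
  unfolding fin_def by (rule finite_subset[of _ "{w. X w \<noteq> 0} \<union> {w. Y w \<noteq> 0}"]) auto
lemma fin_fsub: "fin X \<Longrightarrow> fin Y \<Longrightarrow> fin (fsub X Y)"
  unfolding fin_def by (rule finite_subset[of _ "{w. X w \<noteq> 0} \<union> {w. Y w \<noteq> 0}"]) auto
lemma fin_fsmul: "fin X \<Longrightarrow> fin (fsmul c X)"
  unfolding fin_def by (rule finite_subset[of _ "{w. X w \<noteq> 0}"]) auto
lemma fin_fsum: "finite A \<Longrightarrow> (\<And>a. a \<in> A \<Longrightarrow> fin (f a)) \<Longrightarrow> fin (fsum f A)"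
proof (induction A rule: finite_induct)
  case empty then show ?case by (simp add: fsum_def fin_def)
next
  case (insert x F)
  have eq: "fsum f (insert x F) = fadd (f x) (fsum f F)"
    using insert by (simp add: fsum_def fadd_def)
  have "fin (fsum f F)" using insert.IH insert.prems by blast
  then have "fin (fadd (f x) (fsum f F))" using insert.prems by (intro fin_fadd) auto
  then show ?case by (simp only: eq)
qed
lemma fin_fmul_mon: "fin Y \<Longrightarrow> fin (fmul (mon u) Y)"
  unfolding fmul_mon_left_dec[of Y u] 
  by (rule fin_fsum) (use fin_def[of Y] in \<open>auto intro: fin_fsmul\<close>)
lemma fin_fmul: "fin X \<Longrightarrow> fin Y \<Longrightarrow> fin (fmul X Y)"
  unfolding fmul_dec[of X Y]
  by (rule fin_fsum) (auto simp: fin_def[of X] intro: fin_fsmul fin_fmul_mon)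
lemma fin_gpow [simp]: "fin (gpow k)" by (simp add: gpow_mon)

lemma nword_append [simp]: "nword N (u @ v) \<longleftrightarrow> nword N u \<and> nword N v"
  by (auto simp: nword_def)

lemma nws_mon [simp]: "nws N (mon w) \<longleftrightarrow> nword N w"
  by (auto simp: nws_def mon_def)
lemma nws_fzero [simp]: "nws N fzero" by (simp add: nws_def)
lemma nws_fadd: "nws N X \<Longrightarrow> nws N Y \<Longrightarrow> nws N (fadd X Y)"
  unfolding nws_def
proof (intro allI impI)
  fix w assume X: "\<forall>w. X w \<noteq> 0 \<longrightarrow> nword N w" and Y: "\<forall>w. Y w \<noteq> 0 \<longrightarrow> nword N w"
    and h: "fadd X Y w \<noteq> 0"
  then have "X w \<noteq> 0 \<or> Y w \<noteq> 0" by auto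
  then show "nword N w" using X Y by blast
qed
lemma nws_fsub: "nws N X \<Longrightarrow> nws N Y \<Longrightarrow> nws N (fsub X Y)"
  unfolding nws_def
proof (intro allI impI)
  fix w assume X: "\<forall>w. X w \<noteq> 0 \<longrightarrow> nword N w" and Y: "\<forall>w. Y w \<noteq> 0 \<longrightarrow> nword N w"
    and h: "fsub X Y w \<noteq> 0"
  then have "X w \<noteq> 0 \<or> Y w \<noteq> 0" by auto
  then show "nword N w" using X Y by blast
qed
lemma nws_fsmul: "nws N X \<Longrightarrow> nws N (fsmul c X)"
  by (auto simp: nws_def)
lemma nws_fsum: "(\<And>a. a \<in> A \<Longrightarrow> nws N (f a)) \<Longrightarrow> nws N (fsum f A)"
  unfolding nws_def fsum_apply
proof (intro allI impI)
  fix w assume A: "\<And>a. a \<in> A \<Longrightarrow> \<forall>w. f a w \<noteq> 0 \<longrightarrow> nword N w" and h: "(\<Sum>x\<in>A. f x w) \<noteq> 0"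
  have "\<exists>a\<in>A. f a w \<noteq> 0"
  proof (rule ccontr)
    assume "\<not> ?thesis"
    then have "(\<Sum>x\<in>A. f x w) = 0" by (intro sum.neutral) auto
    with h show False by simp
  qed
  then obtain a where "a \<in> A" "f a w \<noteq> 0" by blast
  then show "nword N w" using A by blast
qed
lemma nws_fmul: "nws N X \<Longrightarrow> nws N Y \<Longrightarrow> nws N (fmul X Y)"
  unfolding nws_def fmul_def
proof (intro allI impI)
  fix w assume X: "\<forall>w. X w \<noteq> 0 \<longrightarrow> nword N w" and Y: "\<forall>w. Y w \<noteq> 0 \<longrightarrow> nword N w"
    and s: "(\<Sum>i\<in>{0..length w}. X (take i w) * Y (drop i w)) \<noteq> 0"
  have "\<exists>i\<in>{0..length w}. X (take i w) * Y (drop i w) \<noteq> 0"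
  proof (rule ccontr)
    assume "\<not> ?thesis"
    then have "(\<Sum>i\<in>{0..length w}. X (take i w) * Y (drop i w)) = 0" by (intro sum.neutral) auto
    with s show False by simp
  qed
  then obtain i where "X (take i w) * Y (drop i w) \<noteq> 0" by blast
  then have "nword N (take i w)" "nword N (drop i w)" using X Y by auto
  then have "nword N (take i w @ drop i w)" by (simp only: nword_append) 
  then show "nword N w" by (simp only: append_take_drop_id)
qed
lemma nword_gw [simp]: "nword N (gw k)" by (auto simp: nword_def gw_def)
lemma nws_gpow [simp]: "nws N (gpow k)" by (simp add: gpow_mon)

lemma good_fadd: "good N X \<Longrightarrow> good N Y \<Longrightarrow> good N (fadd X Y)"
  by (simp add: good_def fin_fadd nws_fadd)
lemma good_fsub: "good N X \<Longrightarrow> good N Y \<Longrightarrow> good N (fsub X Y)"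
  by (simp add: good_def fin_fsub nws_fsub)
lemma good_fsmul: "good N X \<Longrightarrow> good N (fsmul c X)"
  by (simp add: good_def fin_fsmul nws_fsmul)
lemma good_fsum: "finite A \<Longrightarrow> (\<And>a. a \<in> A \<Longrightarrow> good N (f a)) \<Longrightarrow> good N (fsum f A)"
  unfolding good_def using fin_fsum[of A f] nws_fsum[of A N f] by blast
lemma good_fmul: "good N X \<Longrightarrow> good N Y \<Longrightarrow> good N (fmul X Y)"
  by (simp add: good_def fin_fmul nws_fmul)
lemma good_mon [simp]: "good N (mon w) \<longleftrightarrow> nword N w" by (simp add: good_def)
lemma good_fzero [simp]: "good N fzero" by (simp add: good_def)
lemma good_gpow [simp]: "good N (gpow k)" by (simp add: good_def)
lemma good_xm: "i \<in> {1..N} \<Longrightarrow> good N (xm i n)"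
  by (auto simp: xm_def gn_def nword_def)


definition validw :: "nat \<Rightarrow> gen list \<Rightarrow> bool" where
  "validw N w \<longleftrightarrow> (\<forall>g\<in>set w. valid_gen N g)"

lemma validw_append [simp]: "validw N (u @ v) \<longleftrightarrow> validw N u \<and> validw N v"
  by (auto simp: validw_def)
lemma validw_Cons [simp]: "validw N (g # v) \<longleftrightarrow> valid_gen N g \<and> validw N v"
  by (auto simp: validw_def)
lemma validw_Nil [simp]: "validw N []" by (simp add: validw_def)
lemma nword_validw: "nword N w \<Longrightarrow> validw N w"
  by (auto simp: nword_def validw_def)
lemma validw_gw [simp]: "validw N (gw k)" by (auto simp: validw_def gw_def)

lemma rels_c1: "fsub (fmul (gn Gh) (gn Ghinv)) fone \<in> rels N B"
  unfolding rels_def by (rule UnI1, rule UnI1, rule UnI1, rule UnI1, rule UnI1, rule UnI1, rule UnI1, rule UnI1, rule UnI1, rule UnI1, rule UnI1, rule UnI1, rule UnI1, rule UnI1, rule UnI1, rule UnI1, rule UnI1, rule UnI2, simp)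
lemma rels_comm: "valid_gen N g \<Longrightarrow> comm (gn Gh) (gn g) \<in> rels N B"
  unfolding rels_def by (rule UnI1)+ blast
lemma rels_c2: "fsub (fmul (gn Ghinv) (gn Gh)) fone \<in> rels N B"
  unfolding rels_def by (rule UnI1, rule UnI1, rule UnI1, rule UnI1, rule UnI1, rule UnI1, rule UnI1, rule UnI1, rule UnI1, rule UnI1, rule UnI1, rule UnI1, rule UnI1, rule UnI1, rule UnI1, rule UnI1, rule UnI1, rule UnI2, simp)

lemma I_fsub: "a \<in> rel_ideal N B \<Longrightarrow> b \<in> rel_ideal N B \<Longrightarrow> fsub a b \<in> rel_ideal N B"
proof -
  assume a: "a \<in> rel_ideal N B" and b: "b \<in> rel_ideal N B"
  have eq: "fsub a b = fadd a (fsmul (-1) b)" by (rule ext) simp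
  show ?thesis unfolding eq using a b by (intro rel_ideal.add rel_ideal.smul)
qed

lemma I_fsum: "finite A \<Longrightarrow> (\<And>a. a \<in> A \<Longrightarrow> f a \<in> rel_ideal N B) \<Longrightarrow> fsum f A \<in> rel_ideal N B"
proof (induction A rule: finite_induct)
  case empty
  have eq: "fsum f {} = fzero" by (rule ext) simp
  show ?case unfolding eq by (rule rel_ideal.zero)
next
  case (insert x F)
  have eq: "fsum f (insert x F) = fadd (f x) (fsum f F)"
    using insert by (simp add: fsum_def fadd_def)
  have "fsum f F \<in> rel_ideal N B" using insert.IH insert.prems by blast
  then have "fadd (f x) (fsum f F) \<in> rel_ideal N B" using insert.prems by (intro rel_ideal.add) auto
  then show ?case by (simp only: eq)
qed

lemma I_lmon: "validw N u \<Longrightarrow> a \<in> rel_ideal N B \<Longrightarrow> fmul (mon u) a \<in> rel_ideal N B"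
proof (induction u)
  case Nil then show ?case by (simp flip: fone_def)
next
  case (Cons g u)
  have eq: "fmul (mon (g # u)) a = fmul (gn g) (fmul (mon u) a)"
    using fmul_mon_mon_left[of "[g]" u a] by (simp add: gn_def)
  show ?case unfolding eq using Cons by (intro rel_ideal.lmul) auto
qed

lemma I_rmon: "validw N u \<Longrightarrow> a \<in> rel_ideal N B \<Longrightarrow> fmul a (mon u) \<in> rel_ideal N B"
proof (induction u rule: rev_induct)
  case Nil then show ?case by (simp flip: fone_def)
next
  case (snoc g u)
  have eq: "fmul a (mon (u @ [g])) = fmul (fmul a (mon u)) (gn g)"
    using fmul_mon_mon_right[of a u "[g]"] by (simp add: gn_def)
  show ?case unfolding eq using snoc by (intro rel_ideal.rmul) auto
qed

lemma ueq_refl [simp]: "ueq N B a a"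
proof -
  have eq: "fsub a a = fzero" by (rule ext) simp
  show ?thesis unfolding ueq_def eq by (rule rel_ideal.zero)
qed

lemma ueq_sym: "ueq N B a b \<Longrightarrow> ueq N B b a"
proof -
  assume h: "ueq N B a b"
  have eq: "fsub b a = fsmul (-1) (fsub a b)" by (rule ext) simp
  show ?thesis using h unfolding ueq_def eq by (rule rel_ideal.smul)
qed

lemma ueq_trans: "ueq N B a b \<Longrightarrow> ueq N B b c \<Longrightarrow> ueq N B a c"
proof -
  assume h: "ueq N B a b" "ueq N B b c"
  have eq: "fsub a c = fadd (fsub a b) (fsub b c)" by (rule ext) simp
  show ?thesis using h unfolding ueq_def eq by (rule rel_ideal.add)
qed

lemma ueq_fsum: "finite A \<Longrightarrow> (\<And>x. x \<in> A \<Longrightarrow> ueq N B (f x) (g x)) \<Longrightarrow>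
   ueq N B (fsum f A) (fsum g A)"
proof -
  assume h: "finite A" "\<And>x. x \<in> A \<Longrightarrow> ueq N B (f x) (g x)"
  have eq: "fsub (fsum f A) (fsum g A) = fsum (\<lambda>x. fsub (f x) (g x)) A"
    by (rule ext) (simp add: sum_subtractf)
  show ?thesis unfolding ueq_def eq using h unfolding ueq_def by (intro I_fsum) auto
qed

lemma ueq_fsmul: "ueq N B a b \<Longrightarrow> ueq N B (fsmul c a) (fsmul c b)"
proof -
  assume h: "ueq N B a b"
  have eq: "fsub (fsmul c a) (fsmul c b) = fsmul c (fsub a b)" by (rule ext) (simp add: algebra_simps)
  show ?thesis using h unfolding ueq_def eq by (rule rel_ideal.smul)
qed

lemma ueq_fsub_zero: "ueq N B (fsub a b) fzero \<Longrightarrow> ueq N B a b"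
proof -
  have "fsub (fsub a b) fzero = fsub a b" by (rule ext) simp
  then show "ueq N B (fsub a b) fzero \<Longrightarrow> ueq N B a b" by (simp add: ueq_def)
qed

definition weq :: "nat \<Rightarrow> (nat \<Rightarrow> nat \<Rightarrow> int) \<Rightarrow> gen list \<Rightarrow> gen list \<Rightarrow> bool" where
  "weq N B u v \<longleftrightarrow> ueq N B (mon u) (mon v)"

lemma weq_refl [simp]: "weq N B u u" by (simp add: weq_def)
lemma weq_sym: "weq N B u v \<Longrightarrow> weq N B v u" by (simp add: weq_def ueq_sym)
lemma weq_trans: "weq N B u v \<Longrightarrow> weq N B v w \<Longrightarrow> weq N B u w"
  unfolding weq_def by (rule ueq_trans)

lemma weq_ctx:
  assumes "weq N B a b" "validw N p" "validw N s"
  shows "weq N B (p @ a @ s) (p @ b @ s)"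
proof -
  have eq: "fsub (mon (p @ a @ s)) (mon (p @ b @ s)) = fmul (mon p) (fmul (fsub (mon a) (mon b)) (mon s))"
    by (simp add: fmul_fsub_left fmul_fsub_right mon_mul)
  have "fsub (mon a) (mon b) \<in> rel_ideal N B" using assms(1) by (simp add: weq_def ueq_def)
  then show ?thesis unfolding weq_def ueq_def eq using assms(2,3) by (intro I_lmon I_rmon)
qed

lemma weq_swap_Gh: "valid_gen N g \<Longrightarrow> weq N B [Gh, g] [g, Gh]"
proof -
  assume g: "valid_gen N g"
  have "comm (gn Gh) (gn g) \<in> rels N B" using g by (rule rels_comm)
  then have "comm (gn Gh) (gn g) \<in> rel_ideal N B" by (rule rel_ideal.gen)
  moreover have "comm (gn Gh) (gn g) = fsub (mon [Gh, g]) (mon [g, Gh])"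
    by (simp add: comm_def gn_def mon_mul)
  ultimately show ?thesis by (simp add: weq_def ueq_def)
qed

lemma weq_cancel1: "weq N B [Gh, Ghinv] []"
proof -
  have "fsub (fmul (gn Gh) (gn Ghinv)) fone \<in> rel_ideal N B" by (rule rel_ideal.gen, rule rels_c1)
  then show ?thesis by (simp add: weq_def ueq_def gn_def mon_mul fone_def)
qed

lemma weq_cancel2: "weq N B [Ghinv, Gh] []"
proof -
  have "fsub (fmul (gn Ghinv) (gn Gh)) fone \<in> rel_ideal N B" by (rule rel_ideal.gen, rule rels_c2)
  then show ?thesis by (simp add: weq_def ueq_def gn_def mon_mul fone_def)
qed

lemma weq_swap_Ghinv: "valid_gen N g \<Longrightarrow> weq N B [g, Ghinv] [Ghinv, g]"
proof -
  assume g: "valid_gen N g"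
  have 1: "weq N B ([] @ [] @ [g, Ghinv]) ([] @ [Ghinv, Gh] @ [g, Ghinv])"
    by (rule weq_ctx) (use g weq_cancel2 weq_sym in auto)
  have 2: "weq N B ([Ghinv] @ [Gh, g] @ [Ghinv]) ([Ghinv] @ [g, Gh] @ [Ghinv])"
    by (rule weq_ctx) (use g weq_swap_Gh in auto)
  have 3: "weq N B ([Ghinv, g] @ [Gh, Ghinv] @ []) ([Ghinv, g] @ [] @ [])"
    by (rule weq_ctx) (use g weq_cancel1 in auto)
  from 1 2 3 show ?thesis by simp (meson weq_trans)
qed

lemma gw_neg_step: "e < 0 \<Longrightarrow> gw e = Ghinv # gw (e + 1)"
proof -
  assume "e < 0"
  then have "nat (- e) = Suc (nat (- (e + 1)))" by simp
  then show ?thesis using \<open>e < 0\<close> by (simp add: gw_def)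
qed

lemma gw_pos_step: "e > 0 \<Longrightarrow> gw e = Gh # gw (e - 1)"
proof -
  assume "e > 0"
  then have "nat e = Suc (nat (e - 1))" by simp
  then show ?thesis using \<open>e > 0\<close> by (simp add: gw_def)
qed

lemma weq_gw_Gh: "weq N B (Gh # gw e) (gw (e + 1))"
proof (cases "e \<ge> 0")
  case True
  then have "gw (e + 1) = Gh # gw e" using gw_pos_step[of "e+1"] by simp
  then show ?thesis by simp
next
  case False
  then have eq: "gw e = Ghinv # gw (e + 1)" by (simp add: gw_neg_step)
  have "weq N B ([] @ [Gh, Ghinv] @ gw (e + 1)) ([] @ [] @ gw (e + 1))"
    by (rule weq_ctx) (use weq_cancel1 in auto)
  then show ?thesis by (simp add: eq)
qed

lemma weq_gw_Ghinv: "weq N B (Ghinv # gw e) (gw (e - 1))"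
proof (cases "e \<le> 0")
  case True
  then have "gw (e - 1) = Ghinv # gw e" using gw_neg_step[of "e-1"] by simp
  then show ?thesis by simp
next
  case False
  then have eq: "gw e = Gh # gw (e - 1)" by (simp add: gw_pos_step)
  have "weq N B ([] @ [Ghinv, Gh] @ gw (e - 1)) ([] @ [] @ gw (e - 1))"
    by (rule weq_ctx) (use weq_cancel2 in auto)
  then show ?thesis by (simp add: eq)
qed

lemma weq_move_rep:
  assumes g: "valid_gen N g" and h: "h = Gh \<or> h = Ghinv"
  shows "weq N B (g # replicate n h) (replicate n h @ [g])"
proof (induction n)
  case 0 then show ?case by simp
next
  case (Suc n)
  have v: "valid_gen N h" using h by auto
  have 1: "weq N B ([] @ [g, h] @ replicate n h) ([] @ [h, g] @ replicate n h)"
    by (rule weq_ctx) (use g h v weq_swap_Gh weq_swap_Ghinv weq_sym in \<open>auto simp: validw_def\<close>)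
  have 2: "weq N B ([h] @ (g # replicate n h) @ []) ([h] @ (replicate n h @ [g]) @ [])"
    by (rule weq_ctx) (use Suc v in auto)
  from 1 2 show ?case by (simp add: replicate_append_same) (meson weq_trans)
qed

lemma weq_move_gw: "valid_gen N g \<Longrightarrow> weq N B (g # gw e) (gw e @ [g])"
  unfolding gw_def by (auto intro: weq_move_rep)

definition xw :: "(nat \<times> int) list \<Rightarrow> gen list" where
  "xw xs = map (\<lambda>(i, l). Xm i l) xs"

lemma gexp_append [simp]: "gexp (u @ v) = gexp u + gexp v"
  by (induction u rule: gexp.induct) auto
lemma xpart_append [simp]: "xpart (u @ v) = xpart u @ xpart v"
  by (induction u rule: xpart.induct) auto
lemma gexp_xw [simp]: "gexp (xw xs) = 0" by (induction xs) (auto simp: xw_def)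
lemma xpart_xw [simp]: "xpart (xw xs) = xs" by (induction xs) (auto simp: xw_def)
lemma gexp_gw [simp]: "gexp (gw e) = e"
proof -
  have a: "gexp (replicate n Gh) = int n" for n by (induction n) auto
  have b: "gexp (replicate n Ghinv) = - int n" for n by (induction n) auto
  show ?thesis by (simp add: gw_def a b)
qed
lemma xpart_gw [simp]: "xpart (gw e) = []"
proof -
  have a: "xpart (replicate n g) = []" if "g = Gh \<or> g = Ghinv" for n g using that by (induction n) auto
  show ?thesis by (simp add: gw_def a)
qed

lemma nword_xpart: "nword N w \<Longrightarrow> (i, l) \<in> set (xpart w) \<Longrightarrow> i \<in> {1..N}"
  by (induction w rule: xpart.induct) (auto simp: nword_def)

lemma validw_xw: "(\<forall>x\<in>set xs. fst x \<in> {1..N}) \<Longrightarrow> validw N (xw xs)"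
  by (auto simp: xw_def validw_def)

lemma weq_normal: "nword N w \<Longrightarrow> weq N B w (gw (gexp w) @ xw (xpart w))"
proof (induction w)
  case Nil then show ?case by (simp add: gw_def xw_def)
next
  case (Cons g w)
  have nw: "nword N w" using Cons.prems by (simp add: nword_def)
  have vw: "validw N (xw (xpart w))" using nword_xpart[OF nw] by (intro validw_xw) auto
  have 1: "weq N B ([g] @ w @ []) ([g] @ (gw (gexp w) @ xw (xpart w)) @ [])"
    by (rule weq_ctx) (use Cons nw in \<open>auto simp: nword_def\<close>)
  have g: "g = Gh \<or> g = Ghinv \<or> (\<exists>i l. g = Xm i l \<and> i \<in> {1..N})" using Cons.prems by (simp add: nword_def)
  then show ?case
  proof (elim disjE exE conjE)
    assume [simp]: "g = Gh"
    have 2: "weq N B ([] @ (Gh # gw (gexp w)) @ xw (xpart w)) ([] @ gw (gexp w + 1) @ xw (xpart w))"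
      by (rule weq_ctx) (use vw weq_gw_Gh in auto)
    from 1 2 show ?case by simp (meson weq_trans)
  next
    assume [simp]: "g = Ghinv"
    have 2: "weq N B ([] @ (Ghinv # gw (gexp w)) @ xw (xpart w)) ([] @ gw (gexp w - 1) @ xw (xpart w))"
      by (rule weq_ctx) (use vw weq_gw_Ghinv in auto)
    from 1 2 show ?case by simp (meson weq_trans)
  next
    fix i l assume [simp]: "g = Xm i l" and i: "i \<in> {1..N}"
    have 2: "weq N B ([] @ (Xm i l # gw (gexp w)) @ xw (xpart w)) ([] @ (gw (gexp w) @ [Xm i l]) @ xw (xpart w))"
      by (rule weq_ctx) (use vw i weq_move_gw in auto)
    from 1 2 show ?case by (simp add: xw_def) (meson weq_trans)
  qed
qed


section \<open>The coordinate map\<close>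

type_synonym key = "int \<times> (nat \<times> int) list"
type_synonym vec = "key \<Rightarrow>\<^sub>0 F"

definition ph :: "elt \<Rightarrow> vec" where
  "ph X = (\<Sum>w\<in>{w. X w \<noteq> 0}. sg (gexp w, xpart w) (X w))"

lemma ph_sup:
  assumes "finite S" "{w. X w \<noteq> 0} \<subseteq> S"
  shows "ph X = (\<Sum>w\<in>S. sg (gexp w, xpart w) (X w))"
  unfolding ph_def by (rule sum.mono_neutral_left) (use assms in auto)

lemma ph_fadd: "fin X \<Longrightarrow> fin Y \<Longrightarrow> ph (fadd X Y) = ph X + ph Y"
proof -
  assume X: "fin X" and Y: "fin Y"
  let ?S = "{w. X w \<noteq> 0} \<union> {w. Y w \<noteq> 0}"
  have f: "finite ?S" using X Y by (simp add: fin_def)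
  have "ph (fadd X Y) = (\<Sum>w\<in>?S. sg (gexp w, xpart w) (fadd X Y w))"
    by (rule ph_sup) (use f in auto)
  also have "\<dots> = (\<Sum>w\<in>?S. sg (gexp w, xpart w) (X w)) + (\<Sum>w\<in>?S. sg (gexp w, xpart w) (Y w))"
    by (simp add: single_add sum.distrib)
  also have "\<dots> = ph X + ph Y"
    by (subst (1 2) ph_sup[symmetric]) (use f in auto)
  finally show ?thesis .
qed

lemma ph_fsmul: "fin X \<Longrightarrow> ph (fsmul c X) = sc c (ph X)"
proof -
  assume X: "fin X"
  have "ph (fsmul c X) = (\<Sum>w\<in>{w. X w \<noteq> 0}. sg (gexp w, xpart w) (fsmul c X w))"
    by (rule ph_sup) (use X in \<open>auto simp: fin_def\<close>)
  also have "\<dots> = sc c (ph X)" by (simp add: ph_def sc_sum sc_single)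
  finally show ?thesis .
qed

lemma ph_fzero [simp]: "ph fzero = 0" by (simp add: ph_def fzero_def)

lemma ph_fsub: "fin X \<Longrightarrow> fin Y \<Longrightarrow> ph (fsub X Y) = ph X - ph Y"
proof -
  assume X: "fin X" and Y: "fin Y"
  have eq: "fsub X Y = fadd X (fsmul (-1) Y)" by (rule ext) simp
  have "sc (-1) (ph Y) = - ph Y" by (rule poly_mapping_eqI) simp
  then show ?thesis unfolding eq using X Y by (simp add: ph_fadd fin_fsmul ph_fsmul)
qed

lemma ph_fsum: "finite A \<Longrightarrow> (\<And>a. a \<in> A \<Longrightarrow> fin (f a)) \<Longrightarrow> ph (fsum f A) = (\<Sum>a\<in>A. ph (f a))"
proof (induction A rule: finite_induct)
  case empty
  have eq: "fsum f {} = fzero" by (rule ext) simp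
  show ?case unfolding eq by (simp only: ph_fzero sum.empty)
next
  case (insert x F)
  have eq: "fsum f (insert x F) = fadd (f x) (fsum f F)"
    using insert by (simp add: fsum_def fadd_def)
  have ff: "fin (fsum f F)" using insert.prems by (intro fin_fsum) (auto simp: insert.hyps)
  have fx: "fin (f x)" using insert.prems by simp
  have IH: "ph (fsum f F) = (\<Sum>a\<in>F. ph (f a))" using insert.IH insert.prems by blast
  show ?case unfolding eq ph_fadd[OF fx ff] IH by (simp only: sum.insert[OF insert.hyps(1,2)])
qed

lemma ph_mon: "ph (mon w) = sg (gexp w, xpart w) 1"
proof -
  have "{v. mon w v \<noteq> 0} = {w}" by (auto simp: mon_def)
  then show ?thesis by (simp add: ph_def mon_def)
qed

definition lift :: "gen list \<Rightarrow> vec \<Rightarrow> vec" where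
  "lift u = ext (\<lambda>(e, xs). sg (gexp u + e, xpart u @ xs) 1)"

lemma ph_fmul_mon: "fin Y \<Longrightarrow> ph (fmul (mon u) Y) = lift u (ph Y)"
proof -
  assume Y: "fin Y"
  have "ph (fmul (mon u) Y) = ph (fsum (\<lambda>w. fsmul (Y w) (mon (u @ w))) {w. Y w \<noteq> 0})"
    by (simp add: fmul_mon_left_dec[OF Y])
  also have "\<dots> = (\<Sum>w\<in>{w. Y w \<noteq> 0}. ph (fsmul (Y w) (mon (u @ w))))"
    by (rule ph_fsum) (use Y in \<open>auto simp: fin_def[of Y] intro: fin_fsmul\<close>)
  also have "\<dots> = (\<Sum>w\<in>{w. Y w \<noteq> 0}. sc (Y w) (sg (gexp (u @ w), xpart (u @ w)) 1))"
    by (simp add: ph_fsmul ph_mon)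
  also have "\<dots> = lift u (ph Y)"
    by (simp add: lift_def ph_def ext_sum)
  finally show ?thesis .
qed

definition nb :: "key \<Rightarrow> elt" where "nb k = mon (gw (fst k) @ xw (snd k))"

definition Lv :: "vec \<Rightarrow> elt" where
  "Lv v = fsum (\<lambda>k. fsmul (lk v k) (nb k)) (ks v)"

lemma Lv_ph:
  assumes X: "fin X"
  shows "Lv (ph X) = fsum (\<lambda>w. fsmul (X w) (nb (gexp w, xpart w))) {w. X w \<noteq> 0}"
proof (rule ext)
  fix x
  let ?S = "{w. X w \<noteq> 0}"
  let ?k = "\<lambda>w. (gexp w, xpart w)"
  have fS: "finite ?S" using X by (simp add: fin_def)
  have lk: "lk (ph X) k = (\<Sum>w\<in>{w \<in> ?S. ?k w = k}. X w)" for k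
  proof -
    have "lk (ph X) k = (\<Sum>w\<in>?S. if ?k w = k then X w else 0)"
      by (simp add: ph_def lookup_sum lookup_single when_def)
    also have "\<dots> = (\<Sum>w\<in>{w \<in> ?S. ?k w = k}. X w)"
      by (rule sum.inter_filter[OF fS, symmetric])
    finally show ?thesis .
  qed
  have ks: "ks (ph X) \<subseteq> ?k ` ?S"
  proof
    fix k assume "k \<in> ks (ph X)"
    then have "(\<Sum>w\<in>{w \<in> ?S. ?k w = k}. X w) \<noteq> 0" by (simp add: in_keys_iff lk)
    then obtain w where "w \<in> ?S" "?k w = k"
      by (metis (mono_tags, lifting) empty_iff mem_Collect_eq sum.empty subsetI subset_antisym)
    then show "k \<in> ?k ` ?S" by auto
  qed
  have "Lv (ph X) x = (\<Sum>k\<in>ks (ph X). lk (ph X) k * nb k x)" by (simp add: Lv_def)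
  also have "\<dots> = (\<Sum>k\<in>?k ` ?S. lk (ph X) k * nb k x)"
    by (rule sum.mono_neutral_left) (use ks fS in \<open>auto simp: in_keys_iff\<close>)
  also have "\<dots> = (\<Sum>k\<in>?k ` ?S. \<Sum>w\<in>{w \<in> ?S. ?k w = k}. X w * nb (?k w) x)"
    by (rule sum.cong) (auto simp: lk sum_distrib_right)
  also have "\<dots> = (\<Sum>w\<in>?S. X w * nb (?k w) x)"
    by (rule sum.group) (use fS in auto)
  finally show "Lv (ph X) x = fsum (\<lambda>w. fsmul (X w) (nb (gexp w, xpart w))) ?S x" by simp
qed

lemma ueq_Lv: "good N X \<Longrightarrow> ueq N B X (Lv (ph X))"
proof -
  assume g: "good N X"
  then have X: "fin X" by (simp add: good_def)
  have "ueq N B (fsum (\<lambda>w. fsmul (X w) (mon w)) {w. X w \<noteq> 0})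
                 (fsum (\<lambda>w. fsmul (X w) (nb (gexp w, xpart w))) {w. X w \<noteq> 0})"
  proof (rule ueq_fsum)
    show "finite {w. X w \<noteq> 0}" using X by (simp add: fin_def)
  next
    fix w assume "w \<in> {w. X w \<noteq> 0}"
    then have "nword N w" using g by (simp add: good_def nws_def)
    then show "ueq N B (fsmul (X w) (mon w)) (fsmul (X w) (nb (gexp w, xpart w)))"
      by (intro ueq_fsmul) (simp add: nb_def weq_normal[unfolded weq_def])
  qed
  then show ?thesis by (simp add: Lv_ph[OF X] flip: elt_decomp[OF X])
qed

lemma ueq_ph: "good N X \<Longrightarrow> good N Y \<Longrightarrow> ph X = ph Y \<Longrightarrow> ueq N B X Y"
  by (metis ueq_Lv ueq_sym ueq_trans)


lemma comps_0: "comps_fun 0 s = (if s = 0 then {\<lambda>_. 0} else {})"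
  by (auto simp: comps_fun_def)

lemma comps_Suc:
  "comps_fun (Suc p) s = (\<lambda>(a0, a'). case_nat a0 a') ` (SIGMA a0:{..nat s}. comps_fun p (s - int a0))"
proof (intro equalityI subsetI)
  fix a assume a: "a \<in> comps_fun (Suc p) s"
  then have z: "\<forall>m\<ge>Suc p. a m = 0" and sm: "int (\<Sum>m<Suc p. a m) = s" by (auto simp: comps_fun_def)
  have sm2: "(\<Sum>m<Suc p. a m) = a 0 + (\<Sum>m<p. a (Suc m))" by (rule sum.lessThan_Suc_shift)
  have n: "nat s = (\<Sum>m<Suc p. a m)" using sm by (metis nat_int)
  have "a 0 \<le> (\<Sum>m<Suc p. a m)" unfolding sm2 by simp
  then have "a 0 \<le> nat s" by (simp only: n)
  moreover have "(\<lambda>t. a (Suc t)) \<in> comps_fun p (s - int (a 0))"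
  proof -
    have "s = int (a 0) + int (\<Sum>m<p. a (Suc m))" using sm sm2 by (metis of_nat_add)
    then have e: "int (\<Sum>m<p. a (Suc m)) = s - int (a 0)" by linarith
    show ?thesis using z e by (auto simp: comps_fun_def simp del: of_nat_sum)
  qed
  moreover have "a = case_nat (a 0) (\<lambda>t. a (Suc t))"
    by (rule ext) (simp split: nat.split)
  ultimately show "a \<in> (\<lambda>(a0, a'). case_nat a0 a') ` (SIGMA a0:{..nat s}. comps_fun p (s - int a0))"
    by (auto intro!: image_eqI[where x = "(a 0, \<lambda>t. a (Suc t))"])
next
  fix a assume "a \<in> (\<lambda>(a0, a'). case_nat a0 a') ` (SIGMA a0:{..nat s}. comps_fun p (s - int a0))"
  then obtain a0 a' where a: "a = case_nat a0 a'" and a0: "a0 \<le> nat s" and a': "a' \<in> comps_fun p (s - int a0)"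
    by auto
  have "(\<Sum>m<Suc p. a m) = a 0 + (\<Sum>m<p. a (Suc m))" by (rule sum.lessThan_Suc_shift)
  then have "(\<Sum>m<Suc p. a m) = a0 + (\<Sum>m<p. a' m)" by (simp add: a)
  moreover have "int (\<Sum>m<p. a' m) = s - int a0" using a' by (simp add: comps_fun_def del: of_nat_sum)
  ultimately have sm: "int (\<Sum>m<Suc p. a m) = s" by simp
  have z: "\<forall>m\<ge>Suc p. a m = 0"
  proof (intro allI impI)
    fix m assume "Suc p \<le> m"
    then obtain m' where "m = Suc m'" "p \<le> m'" by (cases m) auto
    then show "a m = 0" using a' by (simp add: a comps_fun_def)
  qed
  show "a \<in> comps_fun (Suc p) s" using sm z unfolding comps_fun_def by blast
qed

lemma inj_case_nat: "inj_on (\<lambda>(a0::nat, a'::nat\<Rightarrow>nat). case_nat a0 a') A"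
proof (rule inj_on_inverseI[where g = "\<lambda>f. (f 0, \<lambda>t. f (Suc t))"])
  fix x :: "nat \<times> (nat \<Rightarrow> nat)" assume "x \<in> A"
  show "(\<lambda>f. (f 0, \<lambda>t. f (Suc t))) ((\<lambda>(a0, a'). case_nat a0 a') x) = x" by (cases x) simp
qed

lemma finite_comps [simp]: "finite (comps_fun p s)"
proof (induction p arbitrary: s)
  case 0 then show ?case by (simp add: comps_0)
next
  case (Suc p) then show ?case by (simp add: comps_Suc)
qed

lemma sum_comps_Suc:
  "(\<Sum>a\<in>comps_fun (Suc p) s. f a) = (\<Sum>a0\<le>nat s. \<Sum>a'\<in>comps_fun p (s - int a0). f (case_nat a0 a'))"
proof -
  have "(\<Sum>a\<in>comps_fun (Suc p) s. f a) = (\<Sum>x\<in>(SIGMA a0:{..nat s}. comps_fun p (s - int a0)). f (case_prod case_nat x))"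
    unfolding comps_Suc by (subst sum.reindex[OF inj_case_nat]) (simp add: comp_def case_prod_beta)
  also have "\<dots> = (\<Sum>a0\<le>nat s. \<Sum>a'\<in>comps_fun p (s - int a0). f (case_nat a0 a'))"
    by (subst sum.Sigma) (auto simp: case_prod_beta)
  finally show ?thesis .
qed

lemma comps_neg: "s < 0 \<Longrightarrow> comps_fun p s = {}"
  by (auto simp: comps_fun_def simp del: of_nat_sum)


section \<open>Generic Omega operators\<close>

definition Lp :: "int \<Rightarrow> (nat \<times> int) list \<Rightarrow> nat \<Rightarrow> (nat \<Rightarrow> nat) \<Rightarrow> (nat \<times> int) list" where
  "Lp \<sigma> xs p a = map (\<lambda>m. (fst (xs ! m), snd (xs ! m) + \<sigma> * int (a m))) (filter (\<lambda>m. m \<noteq> p) [0..<length xs])"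

definition Cp :: "int \<Rightarrow> (nat \<Rightarrow> nat \<Rightarrow> int) \<Rightarrow> nat \<Rightarrow> (nat \<times> int) list \<Rightarrow> nat \<Rightarrow> (nat \<Rightarrow> nat) \<Rightarrow> F" where
  "Cp \<sigma> B i xs p a = (\<Prod>m<p. gcoef (qpow (- \<sigma> * B i (fst (xs ! m)))) (a m))"

definition omg :: "int \<Rightarrow> (nat \<Rightarrow> nat \<Rightarrow> int) \<Rightarrow> nat \<Rightarrow> int \<Rightarrow> (nat \<times> int) list \<Rightarrow> elt" where
  "omg \<sigma> B i r xs = fsum (\<lambda>p. if fst (xs ! p) = i then
        fmul (gpow (2 * \<sigma> * r))
          (fsum (\<lambda>a. fsmul (Cp \<sigma> B i xs p a) (xmon (Lp \<sigma> xs p a)))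
                (comps_fun p (\<sigma> * (snd (xs ! p) + r))))
      else fzero) {..<length xs}"

lemma om_psi_mon_omg: "om_psi_mon B i r xs = omg 1 B i r xs"
  unfolding om_psi_mon_def omg_def Cp_def Lp_def by (simp only: mult_1 mult_1_right mult_minus1)

lemma om_phi_mon_omg: "om_phi_mon B i r xs = omg (-1) B i r xs"
proof -
  have a: "- 2 * r = 2 * (- 1) * r" by simp
  have b: "- snd (xs ! p) - r = (- 1) * (snd (xs ! p) + r)" for p by simp
  have c: "qpow (B i j) = qpow (- (- 1) * B i j)" for j by simp
  have d: "snd (xs ! m) - int (a m) = snd (xs ! m) + (- 1) * int (a m)" for m a by simp
  show ?thesis unfolding om_phi_mon_def omg_def Cp_def Lp_def a b c d ..
qed

definition OmG :: "int \<Rightarrow> (nat \<Rightarrow> nat \<Rightarrow> int) \<Rightarrow> nat \<Rightarrow> int \<Rightarrow> elt \<Rightarrow> elt" where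
  "OmG \<sigma> B i r = linext (\<lambda>w. fmul (gpow (gexp w)) (omg \<sigma> B i r (xpart w)))"

lemma OmPsi_OmG: "OmPsi B i r X = OmG 1 B i r X"
  by (simp add: OmPsi_def OmG_def om_psi_mon_omg)

lemma OmPhi_OmG: "OmPhi B i r X = OmG (-1) B i r X"
  by (simp add: OmPhi_def OmG_def om_phi_mon_omg)

definition ompb :: "int \<Rightarrow> (nat \<Rightarrow> nat \<Rightarrow> int) \<Rightarrow> nat \<Rightarrow> int \<Rightarrow> key \<Rightarrow> vec" where
  "ompb \<sigma> B i r k = (\<Sum>p<length (snd k). if fst (snd k ! p) = i then
      (\<Sum>a\<in>comps_fun p (\<sigma> * (snd (snd k ! p) + r)).
          sg (fst k + 2 * \<sigma> * r, Lp \<sigma> (snd k) p a) (Cp \<sigma> B i (snd k) p a))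
     else 0)"

definition Om :: "int \<Rightarrow> (nat \<Rightarrow> nat \<Rightarrow> int) \<Rightarrow> nat \<Rightarrow> int \<Rightarrow> vec \<Rightarrow> vec" where
  "Om \<sigma> B i r = ext (ompb \<sigma> B i r)"

lemma xmon_xw: "xmon xs = mon (xw xs)" by (simp add: xmon_def xw_def)

lemma lift_sg: "lift u (sg (e, xs) c) = sg (gexp u + e, xpart u @ xs) c"
  by (simp add: lift_def sc_single)

lemma lift_sum: "lift u (sum f A) = (\<Sum>a\<in>A. lift u (f a))"
  by (simp add: lift_def ext_sum)

lemma lift_if: "lift u (if P then v else 0) = (if P then lift u v else 0)"
  by (simp add: lift_def)

lemma fin_omg: "fin (omg \<sigma> B i r xs)"
  unfolding omg_def
  by (intro fin_fsum) (auto intro!: fin_fmul fin_fsum fin_fsmul simp: xmon_xw)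

lemma nws_omg: "(\<forall>x\<in>set xs. fst x \<in> {1..N}) \<Longrightarrow> nws N (omg \<sigma> B i r xs)"
  unfolding omg_def
proof (intro nws_fsum)
  assume h: "\<forall>x\<in>set xs. fst x \<in> {1..N}"
  fix p
  have "nword N (xw (Lp \<sigma> xs p a))" for a
    using h by (auto simp: nword_def xw_def Lp_def)
  then show "nws N (if fst (xs ! p) = i then fmul (gpow (2 * \<sigma> * r))
          (fsum (\<lambda>a. fsmul (Cp \<sigma> B i xs p a) (xmon (Lp \<sigma> xs p a)))
                (comps_fun p (\<sigma> * (snd (xs ! p) + r)))) else fzero)"
    by (auto intro!: nws_fmul nws_fsum nws_fsmul simp: xmon_xw)
qed

lemma ph_omg0: "ph (omg \<sigma> B i r xs) = ompb \<sigma> B i r (0, xs)"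
proof -
  have inner: "ph (fmul (gpow (2 * \<sigma> * r))
          (fsum (\<lambda>a. fsmul (Cp \<sigma> B i xs p a) (xmon (Lp \<sigma> xs p a)))
                (comps_fun p (\<sigma> * (snd (xs ! p) + r)))))
     = (\<Sum>a\<in>comps_fun p (\<sigma> * (snd (xs ! p) + r)).
          sg (2 * \<sigma> * r, Lp \<sigma> xs p a) (Cp \<sigma> B i xs p a))" for p
  proof -
    let ?Y = "fsum (\<lambda>a. fsmul (Cp \<sigma> B i xs p a) (xmon (Lp \<sigma> xs p a))) (comps_fun p (\<sigma> * (snd (xs ! p) + r)))"
    have fY: "fin ?Y" by (intro fin_fsum) (auto intro!: fin_fsmul simp: xmon_xw)
    have "ph ?Y = (\<Sum>a\<in>comps_fun p (\<sigma> * (snd (xs ! p) + r)). ph (fsmul (Cp \<sigma> B i xs p a) (xmon (Lp \<sigma> xs p a))))"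
      by (rule ph_fsum) (auto intro!: fin_fsmul simp: xmon_xw)
    also have "\<dots> = (\<Sum>a\<in>comps_fun p (\<sigma> * (snd (xs ! p) + r)). sg (0, Lp \<sigma> xs p a) (Cp \<sigma> B i xs p a))"
      by (simp add: ph_fsmul xmon_xw ph_mon sc_single)
    finally show ?thesis unfolding gpow_mon ph_fmul_mon[OF fY] by (simp add: lift_sum lift_sg)
  qed
  have "ph (omg \<sigma> B i r xs) = (\<Sum>p<length xs. ph (if fst (xs ! p) = i then
        fmul (gpow (2 * \<sigma> * r))
          (fsum (\<lambda>a. fsmul (Cp \<sigma> B i xs p a) (xmon (Lp \<sigma> xs p a)))
                (comps_fun p (\<sigma> * (snd (xs ! p) + r))))
      else fzero))"
    unfolding omg_def
    by (rule ph_fsum) (auto intro!: fin_fmul fin_fsum fin_fsmul simp: xmon_xw)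
  also have "\<dots> = ompb \<sigma> B i r (0, xs)"
    unfolding ompb_def by (rule sum.cong) (auto simp: inner)
  finally show ?thesis .
qed

lemma lift_ompb: "lift (gw e) (ompb \<sigma> B i r (0, xs)) = ompb \<sigma> B i r (e, xs)"
  unfolding ompb_def by (simp add: lift_sum lift_sg lift_if cong: if_cong)

lemma ph_OmG:
  assumes X: "fin X"
  shows "ph (OmG \<sigma> B i r X) = Om \<sigma> B i r (ph X)"
proof -
  let ?S = "{w. X w \<noteq> 0}"
  have fS: "finite ?S" using X by (simp add: fin_def)
  have f1: "fin (fmul (gpow (gexp w)) (omg \<sigma> B i r (xpart w)))" for w
    by (intro fin_fmul fin_gpow fin_omg)
  have "ph (OmG \<sigma> B i r X) = (\<Sum>w\<in>?S. ph (fsmul (X w) (fmul (gpow (gexp w)) (omg \<sigma> B i r (xpart w)))))"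
    unfolding OmG_def linext_def by (rule ph_fsum[OF fS]) (intro fin_fsmul f1)
  also have "\<dots> = (\<Sum>w\<in>?S. sc (X w) (ompb \<sigma> B i r (gexp w, xpart w)))"
    by (rule sum.cong[OF refl])
       (subst ph_fsmul[OF f1], simp only: gpow_mon ph_fmul_mon[OF fin_omg] ph_omg0 lift_ompb)
  also have "\<dots> = Om \<sigma> B i r (ph X)"
    by (simp add: Om_def ph_def ext_sum)
  finally show ?thesis .
qed

lemma good_OmG:
  assumes X: "good N X"
  shows "good N (OmG \<sigma> B i r X)"
  unfolding OmG_def linext_def
proof (rule good_fsum)
  show "finite {w. X w \<noteq> 0}" using X by (simp add: good_def fin_def)
next
  fix w assume "w \<in> {w. X w \<noteq> 0}"
  then have "nword N w" using X by (simp add: good_def nws_def)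
  then have "\<forall>x\<in>set (xpart w). fst x \<in> {1..N}" using nword_xpart by force
  then show "good N (fsmul (X w) (fmul (gpow (gexp w)) (omg \<sigma> B i r (xpart w))))"
    by (intro good_fsmul good_fmul good_gpow) (simp add: good_def fin_omg nws_omg)
qed


definition px :: "nat \<Rightarrow> int \<Rightarrow> int \<Rightarrow> vec \<Rightarrow> vec" where
  "px i n d = ext (\<lambda>k. sg (fst k + d, (i, n) # snd k) 1)"
definition sh :: "int \<Rightarrow> vec \<Rightarrow> vec" where
  "sh d = ext (\<lambda>k. sg (fst k + d, snd k) 1)"

lemma px_sg [simp]: "px i n d (sg (e, xs) c) = sg (e + d, (i, n) # xs) c"
  by (simp add: px_def sc_single)
lemma sh_sg [simp]: "sh d (sg (e, xs) c) = sg (e + d, xs) c"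
  by (simp add: sh_def sc_single)

lemma Lp_Suc:
  "Lp \<sigma> ((i, n) # ys) (Suc p) (case_nat a0 a') = (i, n + \<sigma> * int a0) # Lp \<sigma> ys p a'"
proof -
  have u: "[0..<Suc (length ys)] = 0 # map Suc [0..<length ys]"
    by (simp add: upt_conv_Cons map_Suc_upt del: upt_Suc)
  have f: "filter (\<lambda>m. m \<noteq> Suc p) (map Suc [0..<length ys]) = map Suc (filter (\<lambda>m. m \<noteq> p) [0..<length ys])"
    by (simp add: filter_map comp_def)
  show ?thesis unfolding Lp_def length_Cons u by (simp add: f comp_def del: upt_Suc)
qed

lemma Lp_0: "Lp \<sigma> ((i, n) # ys) 0 (\<lambda>_. 0) = ys"
proof -
  have u: "[0..<Suc (length ys)] = 0 # map Suc [0..<length ys]"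
    by (simp add: upt_conv_Cons map_Suc_upt del: upt_Suc)
  have f: "filter (\<lambda>m. m \<noteq> 0) (map Suc [0..<length ys]) = map Suc [0..<length ys]"
    by (simp add: filter_map comp_def)
  show ?thesis unfolding Lp_def length_Cons u by (simp add: f comp_def map_nth del: upt_Suc)
qed

lemma Cp_Suc:
  "Cp \<sigma> B m ((i, n) # ys) (Suc p) (case_nat a0 a') = gcoef (qpow (- \<sigma> * B m i)) a0 * Cp \<sigma> B m ys p a'"
  unfolding Cp_def prod.lessThan_Suc_shift by simp

lemma ext_if: "ext f (if P then v else 0) = (if P then ext f v else 0)"
  by simp

lemma sc_if: "sc c (if P then v else 0) = (if P then sc c v else 0)"
  by simp

lemma Cp_0: "Cp \<sigma> B m xs 0 a = 1" by (simp add: Cp_def)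

lemma sum_lt_atMost:
  assumes "nat s < M" "\<And>a. a > nat s \<Longrightarrow> g a = 0"
  shows "(\<Sum>a<M. g a) = (\<Sum>a\<le>nat s. g a)"
  by (rule sum.mono_neutral_right) (use assms in auto)

lemma ompb_rec:
  assumes sg: "\<sigma> = 1 \<or> \<sigma> = -1"
    and M: "\<forall>p<length ys. nat (\<sigma> * (snd (ys ! p) + r)) < M"
  shows "ompb \<sigma> B m r (e, (i, n) # ys) =
     (if i = m \<and> r = - n then sg (e + 2 * \<sigma> * r, ys) 1 else 0)
     + (\<Sum>a<M. sc (gcoef (qpow (- \<sigma> * B m i)) a) (px i (n + \<sigma> * int a) (2 * int a) (ompb \<sigma> B m (r - \<sigma> * int a) (e, ys))))"
proof -
  have ss: "\<sigma> * \<sigma> = 1" using sg by auto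
  let ?c = "\<lambda>a. gcoef (qpow (- \<sigma> * B m i)) a"
  let ?T = "\<lambda>p. if fst (((i, n) # ys) ! p) = m then
      (\<Sum>a\<in>comps_fun p (\<sigma> * (snd (((i, n) # ys) ! p) + r)).
          sg (e + 2 * \<sigma> * r, Lp \<sigma> ((i, n) # ys) p a) (Cp \<sigma> B m ((i, n) # ys) p a))
     else 0"
  let ?U = "\<lambda>p a. if fst (ys ! p) = m then
      (\<Sum>a'\<in>comps_fun p (\<sigma> * (snd (ys ! p) + r) - int a).
          sg (e + 2 * \<sigma> * r, (i, n + \<sigma> * int a) # Lp \<sigma> ys p a') (?c a * Cp \<sigma> B m ys p a'))
     else 0"
  have T0: "?T 0 = (if i = m \<and> r = - n then sg (e + 2 * \<sigma> * r, ys) 1 else 0)"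
  proof -
    have "\<sigma> * (n + r) = 0 \<longleftrightarrow> r = - n" using sg by auto
    then show ?thesis by (auto simp: comps_0 Lp_0 Cp_0)
  qed
  have TS: "?T (Suc p) = (\<Sum>a\<le>nat (\<sigma> * (snd (ys ! p) + r)). ?U p a)" for p
    by (simp add: sum_comps_Suc Lp_Suc Cp_Suc)
  have lhs: "ompb \<sigma> B m r (e, (i, n) # ys) = ?T 0 + (\<Sum>p<length ys. ?T (Suc p))"
    unfolding ompb_def by (simp only: fst_conv snd_conv length_Cons sum.lessThan_Suc_shift)
  have inner: "sc (?c a) (px i (n + \<sigma> * int a) (2 * int a) (ompb \<sigma> B m (r - \<sigma> * int a) (e, ys)))
      = (\<Sum>p<length ys. ?U p a)" for a
  proof -
    have e1: "\<sigma> * (snd (ys ! p) + (r - \<sigma> * int a)) = \<sigma> * (snd (ys ! p) + r) - int a" for p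
      using ss by (simp add: algebra_simps)
    have e2: "e + 2 * \<sigma> * (r - \<sigma> * int a) + 2 * int a = e + 2 * \<sigma> * r"
      using ss by (simp add: algebra_simps)
    show ?thesis
      unfolding ompb_def px_def
      by (simp add: ext_sum ext_if sc_if sc_sum sc_single e1 e2 cong: if_cong)
  qed
  have "(\<Sum>a<M. sc (?c a) (px i (n + \<sigma> * int a) (2 * int a) (ompb \<sigma> B m (r - \<sigma> * int a) (e, ys))))
      = (\<Sum>a<M. \<Sum>p<length ys. ?U p a)" by (simp only: inner)
  also have "\<dots> = (\<Sum>p<length ys. \<Sum>a<M. ?U p a)" by (rule sum.swap)
  also have "\<dots> = (\<Sum>p<length ys. ?T (Suc p))"
  proof (rule sum.cong[OF refl])
    fix p assume p: "p \<in> {..<length ys}"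
    have "(\<Sum>a<M. ?U p a) = (\<Sum>a\<le>nat (\<sigma> * (snd (ys ! p) + r)). ?U p a)"
    proof (rule sum_lt_atMost)
      show "nat (\<sigma> * (snd (ys ! p) + r)) < M" using M p by auto
    next
      fix a assume "nat (\<sigma> * (snd (ys ! p) + r)) < a"
      then have "\<sigma> * (snd (ys ! p) + r) - int a < 0" by linarith
      then show "?U p a = 0" by (simp add: comps_neg)
    qed
    then show "(\<Sum>a<M. ?U p a) = ?T (Suc p)" by (simp only: TS)
  qed
  finally show ?thesis unfolding lhs T0 by simp
qed


lemma ext_ext_sg: "ext f (ext (\<lambda>k. sg (h k) 1) v) = ext (\<lambda>k. f (h k)) v"
  by (simp add: ext_ext)

lemma px_add: "px i n d (v + w) = px i n d v + px i n d w" by (simp add: px_def ext_add)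
lemma px_diff: "px i n d (v - w) = px i n d v - px i n d w" by (simp add: px_def ext_diff)
lemma px_sc: "px i n d (sc c v) = sc c (px i n d v)" by (simp add: px_def ext_sc)
lemma px_sum: "px i n d (sum f A) = (\<Sum>a\<in>A. px i n d (f a))" by (simp add: px_def ext_sum)
lemma px_zero [simp]: "px i n d 0 = 0" by (simp add: px_def)
lemma sh_add: "sh d (v + w) = sh d v + sh d w" by (simp add: sh_def ext_add)
lemma sh_diff: "sh d (v - w) = sh d v - sh d w" by (simp add: sh_def ext_diff)
lemma sh_sc: "sh d (sc c v) = sc c (sh d v)" by (simp add: sh_def ext_sc)
lemma sh_sum: "sh d (sum f A) = (\<Sum>a\<in>A. sh d (f a))" by (simp add: sh_def ext_sum)
lemma sh_zero [simp]: "sh d 0 = 0" by (simp add: sh_def)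
lemma Om_add: "Om \<sigma> B i r (v + w) = Om \<sigma> B i r v + Om \<sigma> B i r w" by (simp add: Om_def ext_add)
lemma Om_diff: "Om \<sigma> B i r (v - w) = Om \<sigma> B i r v - Om \<sigma> B i r w" by (simp add: Om_def ext_diff)
lemma Om_sc: "Om \<sigma> B i r (sc c v) = sc c (Om \<sigma> B i r v)" by (simp add: Om_def ext_sc)
lemma Om_sum: "Om \<sigma> B i r (sum f A) = (\<Sum>a\<in>A. Om \<sigma> B i r (f a))" by (simp add: Om_def ext_sum)
lemma Om_zero [simp]: "Om \<sigma> B i r 0 = 0" by (simp add: Om_def)

lemma sh_0 [simp]: "sh 0 v = v"
proof -
  have "sh 0 v = ext (\<lambda>k. sg k 1) v" unfolding sh_def by (rule ext_cong) simp
  then show ?thesis by (simp add: ext_basis)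
qed

lemma sh_sh: "sh d (sh d' v) = sh (d + d') v"
  unfolding sh_def by (simp add: ext_ext sc_single algebra_simps)

lemma px_sh: "px i n x (sh d v) = px i n (d + x) v"
  unfolding sh_def px_def by (simp add: ext_ext sc_single add.assoc)

lemma sh_px: "sh d (px i n x v) = px i n (x + d) v"
  unfolding sh_def px_def by (simp add: ext_ext sc_single add.assoc)

lemma sh_if: "sh d (if P then v else 0) = (if P then sh d v else 0)"
  by simp

lemma ompb_shift: "ompb \<sigma> B i r (e + d, xs) = sh d (ompb \<sigma> B i r (e, xs))"
  unfolding ompb_def by (simp add: sh_sum sh_sg sh_if algebra_simps cong: if_cong)

lemma Om_sh: "Om \<sigma> B i r (sh d v) = sh d (Om \<sigma> B i r v)"
proof -
  have "Om \<sigma> B i r (sh d v) = ext (\<lambda>k. ompb \<sigma> B i r (fst k + d, snd k)) v"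
    unfolding Om_def sh_def by (simp add: ext_ext)
  also have "\<dots> = ext (\<lambda>k. sh d (ompb \<sigma> B i r k)) v"
    by (rule ext_cong) (simp add: ompb_shift)
  also have "\<dots> = sh d (Om \<sigma> B i r v)"
    unfolding Om_def by (simp add: sh_def ext_ext)
  finally show ?thesis .
qed

definition Tb :: "vec \<Rightarrow> int" where
  "Tb v = (\<Sum>k\<in>ks v. \<Sum>x\<leftarrow>snd k. \<bar>snd x\<bar>)"

lemma Tb_bound: "k \<in> ks v \<Longrightarrow> x \<in> set (snd k) \<Longrightarrow> \<bar>snd x\<bar> \<le> Tb v"
proof -
  assume k: "k \<in> ks v" and x: "x \<in> set (snd k)"
  have "\<bar>snd x\<bar> \<le> (\<Sum>x\<leftarrow>snd k. \<bar>snd x\<bar>)"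
    using x by (intro Groups_List.member_le_sum_list) auto
  also have "\<dots> \<le> Tb v" unfolding Tb_def
    by (rule member_le_sum) (use k in \<open>auto intro!: sum_list_nonneg\<close>)
  finally show ?thesis .
qed

lemma ompb_vanish:
  assumes "\<forall>p<length (snd k). \<sigma> * (snd (snd k ! p) + s) < 0"
  shows "ompb \<sigma> B i s k = 0"
  unfolding ompb_def by (rule sum.neutral) (use assms in \<open>auto simp: comps_neg\<close>)

lemma Om_vanish:
  assumes sg: "\<sigma> = 1 \<or> \<sigma> = -1" and s: "\<sigma> * s < - Tb v"
  shows "Om \<sigma> B i s v = 0"
proof -
  have "Om \<sigma> B i s v = ext (\<lambda>k. 0) v"
    unfolding Om_def
  proof (rule ext_cong, rule ompb_vanish, intro allI impI)
    fix k p assume k: "k \<in> ks v" and p: "p < length (snd k)"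
    have "\<bar>snd (snd k ! p)\<bar> \<le> Tb v" using Tb_bound[OF k] p by simp
    then show "\<sigma> * (snd (snd k ! p) + s) < 0" using sg s by (auto simp: algebra_simps)
  qed
  then show ?thesis by (simp add: ext_def)
qed

lemma ext_plus: "ext (\<lambda>k. f k + g k) v = ext f v + ext g v"
  by (simp add: ext_def sc_add sum.distrib)

lemma ext_ifc: "ext (\<lambda>k. if P then f k else 0) v = (if P then ext f v else 0)"
  by (simp add: ext_def)

lemma ext_lin_sum: "ext (\<lambda>k. \<Sum>a\<in>A. sc (c a) (g a k)) v = (\<Sum>a\<in>A. sc (c a) (ext (g a) v))"
proof -
  have "ext (\<lambda>k. \<Sum>a\<in>A. sc (c a) (g a k)) v = (\<Sum>k\<in>ks v. \<Sum>a\<in>A. sc (lk v k * c a) (g a k))"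
    by (simp add: ext_def sc_sum)
  also have "\<dots> = (\<Sum>a\<in>A. \<Sum>k\<in>ks v. sc (c a * lk v k) (g a k))"
    by (subst sum.swap) (simp add: mult.commute)
  also have "\<dots> = (\<Sum>a\<in>A. sc (c a) (ext (g a) v))"
    by (simp add: ext_def sc_sum)
  finally show ?thesis .
qed

lemma sh_sg1: "sh d (sg k c) = sg (fst k + d, snd k) c"
  by (cases k) simp

lemma sh_ext: "sh d v = ext (\<lambda>k. sh d (sg k 1)) v"
  unfolding sh_def by (rule ext_cong) (simp add: sc_single)

lemma px_Om_ext: "px i n d (Om \<sigma> B m r v) = ext (\<lambda>k. px i n d (ompb \<sigma> B m r k)) v"
  unfolding Om_def px_def by (rule ext_ext)

lemma Om_rec:
  assumes sg: "\<sigma> = 1 \<or> \<sigma> = -1" and M: "nat (Tb v + \<sigma> * r) < M"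
  shows "Om \<sigma> B m r (px i n d v) =
     (if i = m \<and> r = - n then sh (d + 2 * \<sigma> * r) v else 0)
     + (\<Sum>a<M. sc (gcoef (qpow (- \<sigma> * B m i)) a) (px i (n + \<sigma> * int a) (d + 2 * int a) (Om \<sigma> B m (r - \<sigma> * int a) v)))"
proof -
  let ?c = "\<lambda>a. gcoef (qpow (- \<sigma> * B m i)) a"
  have "Om \<sigma> B m r (px i n d v) = ext (\<lambda>k. ompb \<sigma> B m r (fst k + d, (i, n) # snd k)) v"
    unfolding Om_def px_def by (simp add: ext_ext)
  also have "\<dots> = ext (\<lambda>k. (if i = m \<and> r = - n then sh (d + 2 * \<sigma> * r) (sg k 1) else 0)
     + (\<Sum>a<M. sc (?c a) (px i (n + \<sigma> * int a) (d + 2 * int a) (ompb \<sigma> B m (r - \<sigma> * int a) k)))) v"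
  proof (rule ext_cong)
    fix k assume k: "k \<in> ks v"
    have Mk: "\<forall>p<length (snd k). nat (\<sigma> * (snd (snd k ! p) + r)) < M"
    proof (intro allI impI)
      fix p assume p: "p < length (snd k)"
      have "\<bar>snd (snd k ! p)\<bar> \<le> Tb v" using Tb_bound[OF k] p by simp
      then have "\<sigma> * (snd (snd k ! p) + r) \<le> Tb v + \<sigma> * r" using sg by (auto simp: algebra_simps)
      then show "nat (\<sigma> * (snd (snd k ! p) + r)) < M" using M by linarith
    qed
    have "ompb \<sigma> B m r (fst k + d, (i, n) # snd k) =
     (if i = m \<and> r = - n then sg (fst k + d + 2 * \<sigma> * r, snd k) 1 else 0)
     + (\<Sum>a<M. sc (?c a) (px i (n + \<sigma> * int a) (2 * int a) (ompb \<sigma> B m (r - \<sigma> * int a) (fst k + d, snd k))))"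
      by (rule ompb_rec[OF sg Mk])
    also have "\<dots> = (if i = m \<and> r = - n then sh (d + 2 * \<sigma> * r) (sg k 1) else 0)
     + (\<Sum>a<M. sc (?c a) (px i (n + \<sigma> * int a) (d + 2 * int a) (ompb \<sigma> B m (r - \<sigma> * int a) k)))"
      by (cases k) (simp add: ompb_shift px_sh algebra_simps)
    finally show "ompb \<sigma> B m r (fst k + d, (i, n) # snd k) = \<dots>" .
  qed
  also have "\<dots> = (if i = m \<and> r = - n then sh (d + 2 * \<sigma> * r) v else 0)
     + (\<Sum>a<M. sc (?c a) (px i (n + \<sigma> * int a) (d + 2 * int a) (Om \<sigma> B m (r - \<sigma> * int a) v)))"
    unfolding ext_plus ext_ifc ext_lin_sum px_Om_ext sh_ext[of _ v] ..
  finally show ?thesis .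
qed


section \<open>Relations 1 and 2\<close>

lemma nsub_good: "P \<in> nsub N \<Longrightarrow> good N P"
  by (simp add: nsub_def good_def fin_def nws_def)

lemma xm_mon: "xm i n = mon [Xm i n]" by (simp add: xm_def gn_def)

lemma ph_xm: "fin Y \<Longrightarrow> ph (fmul (xm i n) Y) = px i n 0 (ph Y)"
  unfolding xm_mon px_def by (simp add: ph_fmul_mon lift_def) (rule ext_cong, simp add: case_prod_beta)

lemma ph_gpow: "fin Y \<Longrightarrow> ph (fmul (gpow d) Y) = sh d (ph Y)"
  unfolding gpow_mon sh_def by (simp add: ph_fmul_mon lift_def) (rule ext_cong, simp add: case_prod_beta add.commute)

lemma fin_xm [simp]: "fin (xm i n)" by (simp add: xm_mon)

lemma ph_fprod3: "fin Z \<Longrightarrow> ph (fprod [gpow d, xm i n, Z]) = px i n d (ph Z)"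
proof -
  assume Z: "fin Z"
  have "fprod [gpow d, xm i n, Z] = fmul (gpow d) (fmul (xm i n) Z)" by (simp add: fprod_def)
  then show ?thesis using Z by (simp add: ph_gpow ph_xm fin_fmul sh_px)
qed

lemma good_fone [simp]: "good N fone" by (simp add: fone_def nword_def)

lemma good_fprod3: "good N Z \<Longrightarrow> i \<in> {1..N} \<Longrightarrow> good N (fprod [gpow d, xm i n, Z])"
  by (simp add: fprod_def good_fmul good_xm)

lemma good_fin: "good N X \<Longrightarrow> fin X" by (simp add: good_def)

lemma rel12:
  assumes sg: "\<sigma> = 1 \<or> \<sigma> = -1" and P: "good N P" and i: "i \<in> {1..N}" and m: "m \<in> {1..N}"
    and Bs: "B m i = B i m"
  shows "\<exists>M. (\<forall>a\<ge>M. ueq N B (OmG \<sigma> B m (r - \<sigma> * int a) P) fzero) \<and>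
     ueq N B (OmG \<sigma> B m r (fmul (xm i n) P))
       (fadd (if i = m \<and> r = - n then fmul (gpow (2 * \<sigma> * r)) P else fzero)
          (fsum (\<lambda>a. fsmul (gcoef (qpow (- \<sigma> * B i m)) a)
              (fprod [gpow (2 * int a), xm i (n + \<sigma> * int a), OmG \<sigma> B m (r - \<sigma> * int a) P])) {..<M}))"
proof -
  let ?v = "ph P"
  define M where "M = nat (Tb ?v + \<sigma> * r) + 1"
  have fP: "fin P" using P by (simp add: good_def)
  have gO: "good N (OmG \<sigma> B m s X)" if "good N X" for s X using that by (rule good_OmG)
  have phO: "ph (OmG \<sigma> B m s X) = Om \<sigma> B m s (ph X)" if "good N X" for s X
    using that by (simp add: ph_OmG good_def)
  have van: "\<forall>a\<ge>M. ueq N B (OmG \<sigma> B m (r - \<sigma> * int a) P) fzero"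
  proof (intro allI impI)
    fix a assume a: "M \<le> a"
    have "\<sigma> * (r - \<sigma> * int a) < - Tb ?v"
    proof -
      have "\<sigma> * (r - \<sigma> * int a) = \<sigma> * r - int a" using sg by (auto simp: algebra_simps)
      then show ?thesis using a unfolding M_def by linarith
    qed
    then have "ph (OmG \<sigma> B m (r - \<sigma> * int a) P) = ph fzero"
      using P by (simp add: phO Om_vanish[OF sg])
    then show "ueq N B (OmG \<sigma> B m (r - \<sigma> * int a) P) fzero"
      by (intro ueq_ph gO P) simp
  qed
  let ?L = "OmG \<sigma> B m r (fmul (xm i n) P)"
  let ?X = "if i = m \<and> r = - n then fmul (gpow (2 * \<sigma> * r)) P else fzero"
  let ?Y = "fsum (\<lambda>a. fsmul (gcoef (qpow (- \<sigma> * B i m)) a)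
              (fprod [gpow (2 * int a), xm i (n + \<sigma> * int a), OmG \<sigma> B m (r - \<sigma> * int a) P])) {..<M}"
  have gP: "good N (fmul (xm i n) P)" using P i by (intro good_fmul good_xm)
  have gX: "good N ?X" using P by (auto intro: good_fmul)
  have gY: "good N ?Y" using P i by (intro good_fsum good_fsmul good_fprod3 gO) auto
  have phL: "ph ?L = (if i = m \<and> r = - n then sh (0 + 2 * \<sigma> * r) ?v else 0)
     + (\<Sum>a<M. sc (gcoef (qpow (- \<sigma> * B m i)) a) (px i (n + \<sigma> * int a) (0 + 2 * int a) (Om \<sigma> B m (r - \<sigma> * int a) ?v)))"
    using phO[OF gP] ph_xm[OF fP] Om_rec[OF sg, of ?v r M B m i n 0] by (simp add: M_def)
  have phX: "ph ?X = (if i = m \<and> r = - n then sh (2 * \<sigma> * r) ?v else 0)"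
    using fP by (simp add: ph_gpow)
  have phY: "ph ?Y = (\<Sum>a<M. sc (gcoef (qpow (- \<sigma> * B i m)) a) (px i (n + \<sigma> * int a) (2 * int a) (Om \<sigma> B m (r - \<sigma> * int a) ?v)))"
  proof -
    have "ph ?Y = (\<Sum>a<M. ph (fsmul (gcoef (qpow (- \<sigma> * B i m)) a)
              (fprod [gpow (2 * int a), xm i (n + \<sigma> * int a), OmG \<sigma> B m (r - \<sigma> * int a) P])))"
      by (rule ph_fsum) (use gY P i in \<open>auto intro!: good_fin good_fsmul good_fprod3 gO\<close>)
    also have "\<dots> = (\<Sum>a<M. sc (gcoef (qpow (- \<sigma> * B i m)) a) (px i (n + \<sigma> * int a) (2 * int a) (Om \<sigma> B m (r - \<sigma> * int a) ?v)))"
    proof (rule sum.cong[OF refl])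
      fix a
      have g1: "good N (OmG \<sigma> B m (r - \<sigma> * int a) P)" using P by (rule gO)
      have g2: "good N (fprod [gpow (2 * int a), xm i (n + \<sigma> * int a), OmG \<sigma> B m (r - \<sigma> * int a) P])"
        using g1 i by (rule good_fprod3)
      show "ph (fsmul (gcoef (qpow (- \<sigma> * B i m)) a)
              (fprod [gpow (2 * int a), xm i (n + \<sigma> * int a), OmG \<sigma> B m (r - \<sigma> * int a) P]))
         = sc (gcoef (qpow (- \<sigma> * B i m)) a) (px i (n + \<sigma> * int a) (2 * int a) (Om \<sigma> B m (r - \<sigma> * int a) ?v))"
        using g1 g2 P by (simp add: ph_fsmul good_fin ph_fprod3 phO)
    qed
    finally show ?thesis .
  qed
  have fa: "ph (fadd ?X ?Y) = ph ?X + ph ?Y" by (rule ph_fadd) (use gX gY in \<open>auto simp: good_fin\<close>)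
  have "ph ?L = ph (fadd ?X ?Y)"
    unfolding fa phL phX phY using Bs by simp
  then have "ueq N B ?L (fadd ?X ?Y)"
    by (intro ueq_ph good_fadd gX gY good_OmG gP)
  with van show ?thesis by blast
qed


lemma qh_nz: "qh \<noteq> 0" by (simp add: qh_def Zero_fract_def eq_fract)
lemma qq_nz: "qq \<noteq> 0" by (simp add: qq_def qh_nz)
lemma qpow_nz [simp]: "qpow k \<noteq> 0" by (simp add: qpow_def qq_nz)
lemma qpow_neg: "qpow (- k) = inverse (qpow k)" by (simp add: qpow_def power_int_minus)
lemma qpow_mult: "qpow a * qpow b = qpow (a + b)" by (simp add: qpow_def power_int_add qq_nz)

lemma gser_mul:
  assumes Q: "Q \<noteq> 0"
  shows "gser Q * (fps_X - fps_const Q) = fps_const Q * fps_X - 1"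
proof -
  have "fps_nth (fps_X - fps_const Q) 0 \<noteq> 0" using Q by simp
  then have "inverse (fps_X - fps_const Q) * (fps_X - fps_const Q) = 1" by (rule inverse_mult_eq_1)
  then show ?thesis by (simp add: gser_def mult.assoc)
qed

lemma gcoef_rec:
  assumes Q: "Q \<noteq> 0"
  shows "(if n = 0 then 0 else gcoef Q (n - 1)) - Q * gcoef Q n = (if n = 1 then Q else if n = 0 then -1 else 0)"
proof -
  have "fps_nth (gser Q * (fps_X - fps_const Q)) n = fps_nth (fps_const Q * fps_X - 1) n"
    by (simp only: gser_mul[OF Q])
  then show ?thesis by (simp add: algebra_simps gcoef_def fps_X_nth split: if_splits)
qed

lemma gc0: "Q \<noteq> 0 \<Longrightarrow> gcoef Q 0 = inverse Q"
  using gcoef_rec[of Q 0] by (simp add: field_simps)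

lemma gc1: "Q \<noteq> 0 \<Longrightarrow> gcoef Q 0 - Q * gcoef Q 1 = Q"
  using gcoef_rec[of Q 1] by simp

lemma gcS: "Q \<noteq> 0 \<Longrightarrow> n \<ge> 2 \<Longrightarrow> gcoef Q (n - 1) = Q * gcoef Q n"
  using gcoef_rec[of Q n] by simp


section \<open>Expansion of a double application\<close>

lemma Tb_zero [simp]: "Tb 0 = 0" by (simp add: Tb_def)

lemma Om_if: "Om \<sigma> B i r (if P then v else 0) = (if P then Om \<sigma> B i r v else 0)" by simp

lemma expand2:
  assumes sg1: "\<sigma>1 = 1 \<or> \<sigma>1 = -1" and sg2: "\<sigma>2 = 1 \<or> \<sigma>2 = -1"
  shows "\<exists>K. \<forall>M\<ge>K. Om \<sigma>1 B j s1 (Om \<sigma>2 B k s2 (px i n 0 Y)) =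
   (if i = k \<and> s2 = - n then sh (2 * \<sigma>2 * s2) (Om \<sigma>1 B j s1 Y) else 0)
   + (\<Sum>a<M. sc (gcoef (qpow (- \<sigma>2 * B k i)) a)
        (if i = j \<and> s1 = - (n + \<sigma>2 * int a) then sh (2 * int a + 2 * \<sigma>1 * s1) (Om \<sigma>2 B k (s2 - \<sigma>2 * int a) Y) else 0))
   + (\<Sum>a<M. \<Sum>b<M. sc (gcoef (qpow (- \<sigma>2 * B k i)) a * gcoef (qpow (- \<sigma>1 * B j i)) b)
        (px i (n + \<sigma>2 * int a + \<sigma>1 * int b) (2 * int a + 2 * int b)
           (Om \<sigma>1 B j (s1 - \<sigma>1 * int b) (Om \<sigma>2 B k (s2 - \<sigma>2 * int a) Y))))"
proof -
  let ?W = "\<lambda>a. Om \<sigma>2 B k (s2 - \<sigma>2 * int a) Y"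
  let ?c1 = "\<lambda>b. gcoef (qpow (- \<sigma>1 * B j i)) b"
  let ?c2 = "\<lambda>a. gcoef (qpow (- \<sigma>2 * B k i)) a"
  define M0 where "M0 = nat (Tb Y + \<sigma>2 * s2) + 1"
  define K where "K = M0 + (\<Sum>a<M0. nat (Tb (?W a) + \<sigma>1 * s1)) + nat (\<sigma>1 * s1) + 1"
  have "\<forall>M\<ge>K. Om \<sigma>1 B j s1 (Om \<sigma>2 B k s2 (px i n 0 Y)) =
   (if i = k \<and> s2 = - n then sh (2 * \<sigma>2 * s2) (Om \<sigma>1 B j s1 Y) else 0)
   + (\<Sum>a<M. sc (?c2 a)
        (if i = j \<and> s1 = - (n + \<sigma>2 * int a) then sh (2 * int a + 2 * \<sigma>1 * s1) (?W a) else 0))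
   + (\<Sum>a<M. \<Sum>b<M. sc (?c2 a * ?c1 b)
        (px i (n + \<sigma>2 * int a + \<sigma>1 * int b) (2 * int a + 2 * int b) (Om \<sigma>1 B j (s1 - \<sigma>1 * int b) (?W a))))"
  proof (intro allI impI)
    fix M assume MK: "K \<le> M"
    have M1: "nat (Tb Y + \<sigma>2 * s2) < M" using MK unfolding K_def M0_def by linarith
    have step1: "Om \<sigma>2 B k s2 (px i n 0 Y) =
       (if i = k \<and> s2 = - n then sh (0 + 2 * \<sigma>2 * s2) Y else 0)
       + (\<Sum>a<M. sc (?c2 a) (px i (n + \<sigma>2 * int a) (0 + 2 * int a) (?W a)))"
      by (rule Om_rec[OF sg2 M1])
    have step3: "Om \<sigma>1 B j s1 (px i (n + \<sigma>2 * int a) (2 * int a) (?W a)) =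
       (if i = j \<and> s1 = - (n + \<sigma>2 * int a) then sh (2 * int a + 2 * \<sigma>1 * s1) (?W a) else 0)
       + (\<Sum>b<M. sc (?c1 b) (px i (n + \<sigma>2 * int a + \<sigma>1 * int b) (2 * int a + 2 * int b) (Om \<sigma>1 B j (s1 - \<sigma>1 * int b) (?W a))))"
      if a: "a < M" for a
    proof -
      have "nat (Tb (?W a) + \<sigma>1 * s1) < M"
      proof (cases "a < M0")
        case True
        have "nat (Tb (?W a) + \<sigma>1 * s1) \<le> (\<Sum>a<M0. nat (Tb (?W a) + \<sigma>1 * s1))"
          by (rule member_le_sum) (use True in auto)
        then show ?thesis using MK unfolding K_def by linarith
      next
        case False
        have "\<sigma>2 * (s2 - \<sigma>2 * int a) = \<sigma>2 * s2 - int a" using sg2 by (auto simp: algebra_simps)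
        then have "\<sigma>2 * (s2 - \<sigma>2 * int a) < - Tb Y" using False unfolding M0_def by linarith
        then have "?W a = 0" by (rule Om_vanish[OF sg2])
        then show ?thesis using MK unfolding K_def by simp
      qed
      then show ?thesis by (rule Om_rec[OF sg1])
    qed
    have "Om \<sigma>1 B j s1 (Om \<sigma>2 B k s2 (px i n 0 Y)) =
       (if i = k \<and> s2 = - n then sh (2 * \<sigma>2 * s2) (Om \<sigma>1 B j s1 Y) else 0)
       + (\<Sum>a<M. sc (?c2 a) (Om \<sigma>1 B j s1 (px i (n + \<sigma>2 * int a) (2 * int a) (?W a))))"
      unfolding step1 by (simp add: Om_add Om_sum Om_sc Om_sh)
    also have "\<dots> = (if i = k \<and> s2 = - n then sh (2 * \<sigma>2 * s2) (Om \<sigma>1 B j s1 Y) else 0)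
       + (\<Sum>a<M. sc (?c2 a) ((if i = j \<and> s1 = - (n + \<sigma>2 * int a) then sh (2 * int a + 2 * \<sigma>1 * s1) (?W a) else 0)
       + (\<Sum>b<M. sc (?c1 b) (px i (n + \<sigma>2 * int a + \<sigma>1 * int b) (2 * int a + 2 * int b) (Om \<sigma>1 B j (s1 - \<sigma>1 * int b) (?W a))))))"
      by (simp add: step3)
    also have "\<dots> = (if i = k \<and> s2 = - n then sh (2 * \<sigma>2 * s2) (Om \<sigma>1 B j s1 Y) else 0)
   + (\<Sum>a<M. sc (?c2 a)
        (if i = j \<and> s1 = - (n + \<sigma>2 * int a) then sh (2 * int a + 2 * \<sigma>1 * s1) (?W a) else 0))
   + (\<Sum>a<M. \<Sum>b<M. sc (?c2 a * ?c1 b)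
        (px i (n + \<sigma>2 * int a + \<sigma>1 * int b) (2 * int a + 2 * int b) (Om \<sigma>1 B j (s1 - \<sigma>1 * int b) (?W a))))"
      by (simp add: sc_add sc_sum sum.distrib add.assoc)
    finally show "Om \<sigma>1 B j s1 (Om \<sigma>2 B k s2 (px i n 0 Y)) = \<dots>" .
  qed
  then show ?thesis by blast
qed


lemma sum_collapse:
  "(\<Sum>a<M. sc (c a) (if P \<and> int a = t then f a else 0)) =
   (if P \<and> 0 \<le> t \<and> nat t < M then sc (c (nat t)) (f (nat t)) else 0)"
proof (cases "P \<and> 0 \<le> t")
  case True
  have "(\<Sum>a<M. sc (c a) (if P \<and> int a = t then f a else 0)) = (\<Sum>a<M. if a = nat t then sc (c a) (f a) else 0)"
    by (rule sum.cong) (use True in auto)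
  also have "\<dots> = (if nat t < M then sc (c (nat t)) (f (nat t)) else 0)"
    by (simp add: sum.delta')
  finally show ?thesis using True by simp
next
  case False
  then have "(\<Sum>a<M. sc (c a) (if P \<and> int a = t then f a else 0)) = (\<Sum>a<M. 0)"
    by (intro sum.cong) auto
  moreover have "(if P \<and> 0 \<le> t \<and> nat t < M then sc (c (nat t)) (f (nat t)) else 0) = 0"
    using False by auto
  ultimately show ?thesis by simp
qed

lemma sc_sh_comm: "sh d (sc c v) = sc c (sh d v)" by (rule sh_sc)

lemma crossI_p:
  fixes F :: "int \<Rightarrow> vec"
  assumes Q: "Q \<noteq> 0" and c: "P \<Longrightarrow> c = gcoef (inverse Q)" and g: "g = 2 * \<sigma>2 - 2"
    and M: "- n - r2 < int M"
  shows "sc Q (sh g (if P \<and> r2 = - n then sh (2 * \<sigma>2 * r2) (F (r1 + 1)) else 0))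
      - (if P \<and> r2 + 1 = - n then sh (2 * \<sigma>2 * (r2 + 1)) (F r1) else 0)
   = sh g (\<Sum>a<M. sc (c a) (if P \<and> r2 = - (n + 1 * int a) then sh (2 * int a + 2 * \<sigma>2 * r2) (F (r1 + 1 - 1 * int a)) else 0))
     - sc Q (\<Sum>a<M. sc (c a) (if P \<and> r2 + 1 = - (n + 1 * int a) then sh (2 * int a + 2 * \<sigma>2 * (r2 + 1)) (F (r1 - 1 * int a)) else 0))"
proof (cases P)
  case False then show ?thesis by simp
next
  case True
  note cc = c[OF True]
  define t where "t = - n - r2"
  have s1: "(\<Sum>a<M. sc (c a) (if P \<and> r2 = - (n + 1 * int a) then sh (2 * int a + 2 * \<sigma>2 * r2) (F (r1 + 1 - 1 * int a)) else 0))
     = (if P \<and> 0 \<le> t \<and> nat t < M then sc (c (nat t)) (sh (2 * int (nat t) + 2 * \<sigma>2 * r2) (F (r1 + 1 - int (nat t)))) else 0)"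
  proof -
    have "(\<Sum>a<M. sc (c a) (if P \<and> r2 = - (n + 1 * int a) then sh (2 * int a + 2 * \<sigma>2 * r2) (F (r1 + 1 - 1 * int a)) else 0))
      = (\<Sum>a<M. sc (c a) (if P \<and> int a = t then sh (2 * int a + 2 * \<sigma>2 * r2) (F (r1 + 1 - int a)) else 0))"
      by (rule sum.cong) (auto simp: t_def algebra_simps)
    then show ?thesis by (simp only: sum_collapse)
  qed
  have s2: "(\<Sum>a<M. sc (c a) (if P \<and> r2 + 1 = - (n + 1 * int a) then sh (2 * int a + 2 * \<sigma>2 * (r2 + 1)) (F (r1 - 1 * int a)) else 0))
     = (if P \<and> 0 \<le> t - 1 \<and> nat (t - 1) < M then sc (c (nat (t - 1))) (sh (2 * int (nat (t - 1)) + 2 * \<sigma>2 * (r2 + 1)) (F (r1 - int (nat (t - 1))))) else 0)"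
  proof -
    have "(\<Sum>a<M. sc (c a) (if P \<and> r2 + 1 = - (n + 1 * int a) then sh (2 * int a + 2 * \<sigma>2 * (r2 + 1)) (F (r1 - 1 * int a)) else 0))
      = (\<Sum>a<M. sc (c a) (if P \<and> int a = t - 1 then sh (2 * int a + 2 * \<sigma>2 * (r2 + 1)) (F (r1 - int a)) else 0))"
      by (rule sum.cong) (auto simp: t_def algebra_simps)
    then show ?thesis by (simp only: sum_collapse)
  qed
  have Qi: "inverse Q \<noteq> 0" using Q by simp
  consider "t < 0" | "t = 0" | "t = 1" | "t \<ge> 2" by linarith
  then show ?thesis
  proof cases
    case 1
    then show ?thesis unfolding s1 s2 using True by (simp add: t_def)
  next
    case 2
    have "c 0 = Q" using gc0[OF Qi] cc by simp
    then show ?thesis unfolding s1 s2 using True 2 M by (simp add: t_def sh_sc)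
  next
    case 3
    have c1: "c 1 - Q * c 0 = -1"
    proof -
      have "c 0 - inverse Q * c 1 = inverse Q" using gc1[OF Qi] cc by simp
      then have "Q * (c 0 - inverse Q * c 1) = Q * inverse Q" by simp
      then show ?thesis using Q by (simp add: algebra_simps)
    qed
    have sh_eq: "g + (2 + 2 * \<sigma>2 * r2) = 2 * \<sigma>2 * (r2 + 1)" using g by (simp add: algebra_simps)
    have "sh g (sc (c 1) (sh (2 + 2 * \<sigma>2 * r2) (F r1))) - sc Q (sc (c 0) (sh (2 * \<sigma>2 * (r2 + 1)) (F r1)))
        = sc (c 1 - Q * c 0) (sh (2 * \<sigma>2 * (r2 + 1)) (F r1))"
      by (simp add: sh_sc sh_sh sh_eq sc_diffc)
    also have "\<dots> = - sh (2 * \<sigma>2 * (r2 + 1)) (F r1)" unfolding c1 by (rule poly_mapping_eqI) simp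
    finally have e: "sh g (sc (c 1) (sh (2 + 2 * \<sigma>2 * r2) (F r1))) - sc Q (sc (c 0) (sh (2 * \<sigma>2 * (r2 + 1)) (F r1)))
        = - sh (2 * \<sigma>2 * (r2 + 1)) (F r1)" .
    have "r2 + 1 = - n" "r2 \<noteq> - n" using 3 by (auto simp: t_def)
    moreover have "1 < M" using M 3 unfolding t_def by linarith
    ultimately show ?thesis unfolding s1 s2 using True 3 e by simp
  next
    case 4
    have cS: "Q * c (nat t - 1) = c (nat t)"
    proof -
      have "c (nat t - 1) = inverse Q * c (nat t)" using gcS[OF Qi, of "nat t"] cc 4 by simp
      then show ?thesis using Q by simp
    qed
    have n1: "nat (t - 1) = nat t - 1" using 4 by simp
    have sh_eq: "g + (2 * t + 2 * \<sigma>2 * r2) = 2 * (t - 1) + 2 * \<sigma>2 * (r2 + 1)" using g by (simp add: algebra_simps)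
    have f_eq: "r1 + 1 - t = r1 - (t - 1)" by simp
    have "nat t < M" "nat (t - 1) < M" using M 4 unfolding t_def by linarith+
    have "r2 + 1 \<noteq> - n" "r2 \<noteq> - n" using 4 by (auto simp: t_def)
    then have "?thesis \<longleftrightarrow> 0 = sh g (sc (c (nat t)) (sh (2 * t + 2 * \<sigma>2 * r2) (F (r1 + 1 - t))))
       - sc Q (sc (c (nat (t - 1))) (sh (2 * (t - 1) + 2 * \<sigma>2 * (r2 + 1)) (F (r1 - (t - 1)))))"
      unfolding s1 s2 using True 4 \<open>nat t < M\<close> \<open>nat (t - 1) < M\<close> by simp
    moreover have "sh g (sc (c (nat t)) (sh (2 * t + 2 * \<sigma>2 * r2) (F (r1 + 1 - t))))
       = sc Q (sc (c (nat (t - 1))) (sh (2 * (t - 1) + 2 * \<sigma>2 * (r2 + 1)) (F (r1 - (t - 1)))))"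
      by (simp only: sh_sc sh_sh sh_eq f_eq sc_sc n1 cS)
    ultimately show ?thesis by simp
  qed
qed


lemma crossI_m:
  fixes F :: "int \<Rightarrow> vec"
  assumes Q: "Q \<noteq> 0" and c: "P \<Longrightarrow> c = gcoef Q" and g: "g = 2 * \<sigma>2 + 2"
    and M: "n + r2 + 1 < int M"
  shows "sc Q (sh g (if P \<and> r2 = - n then sh (2 * \<sigma>2 * r2) (F (r1 + 1)) else 0))
      - (if P \<and> r2 + 1 = - n then sh (2 * \<sigma>2 * (r2 + 1)) (F r1) else 0)
   = sh g (\<Sum>a<M. sc (c a) (if P \<and> r2 = - (n + - 1 * int a) then sh (2 * int a + 2 * \<sigma>2 * r2) (F (r1 + 1 - - 1 * int a)) else 0))
     - sc Q (\<Sum>a<M. sc (c a) (if P \<and> r2 + 1 = - (n + - 1 * int a) then sh (2 * int a + 2 * \<sigma>2 * (r2 + 1)) (F (r1 - - 1 * int a)) else 0))"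
proof (cases P)
  case False then show ?thesis by simp
next
  case True
  note cc = c[OF True]
  define t where "t = n + r2"
  have s1: "(\<Sum>a<M. sc (c a) (if P \<and> r2 = - (n + - 1 * int a) then sh (2 * int a + 2 * \<sigma>2 * r2) (F (r1 + 1 - - 1 * int a)) else 0))
     = (if P \<and> 0 \<le> t \<and> nat t < M then sc (c (nat t)) (sh (2 * int (nat t) + 2 * \<sigma>2 * r2) (F (r1 + 1 + int (nat t)))) else 0)"
  proof -
    have "(\<Sum>a<M. sc (c a) (if P \<and> r2 = - (n + - 1 * int a) then sh (2 * int a + 2 * \<sigma>2 * r2) (F (r1 + 1 - - 1 * int a)) else 0))
      = (\<Sum>a<M. sc (c a) (if P \<and> int a = t then sh (2 * int a + 2 * \<sigma>2 * r2) (F (r1 + 1 + int a)) else 0))"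
      by (rule sum.cong) (auto simp: t_def algebra_simps)
    then show ?thesis by (simp only: sum_collapse)
  qed
  have s2: "(\<Sum>a<M. sc (c a) (if P \<and> r2 + 1 = - (n + - 1 * int a) then sh (2 * int a + 2 * \<sigma>2 * (r2 + 1)) (F (r1 - - 1 * int a)) else 0))
     = (if P \<and> 0 \<le> t + 1 \<and> nat (t + 1) < M then sc (c (nat (t + 1))) (sh (2 * int (nat (t + 1)) + 2 * \<sigma>2 * (r2 + 1)) (F (r1 + int (nat (t + 1))))) else 0)"
  proof -
    have "(\<Sum>a<M. sc (c a) (if P \<and> r2 + 1 = - (n + - 1 * int a) then sh (2 * int a + 2 * \<sigma>2 * (r2 + 1)) (F (r1 - - 1 * int a)) else 0))
      = (\<Sum>a<M. sc (c a) (if P \<and> int a = t + 1 then sh (2 * int a + 2 * \<sigma>2 * (r2 + 1)) (F (r1 + int a)) else 0))"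
      by (rule sum.cong) (auto simp: t_def algebra_simps)
    then show ?thesis by (simp only: sum_collapse)
  qed
  consider "t < -1" | "t = -1" | "t = 0" | "t \<ge> 1" by linarith
  then show ?thesis
  proof cases
    case 1
    then show ?thesis unfolding s1 s2 using True by (simp add: t_def)
  next
    case 2
    have "c 0 = inverse Q" using gc0[OF Q] cc by simp
    then have e: "Q * c 0 = 1" using Q by simp
    have "r2 + 1 = - n" "r2 \<noteq> - n" using 2 by (auto simp: t_def)
    moreover have "0 < M" using M 2 unfolding t_def by linarith
    ultimately show ?thesis unfolding s1 s2 using True 2 e by simp
  next
    case 3
    have c1: "c 0 - Q * c 1 = Q" using gc1[OF Q] cc by simp
    have sh_eq: "g + 2 * \<sigma>2 * r2 = 2 + 2 * \<sigma>2 * (r2 + 1)" using g by (simp add: algebra_simps)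
    have "sh g (sc (c 0) (sh (2 * \<sigma>2 * r2) (F (r1 + 1)))) - sc Q (sc (c 1) (sh (2 + 2 * \<sigma>2 * (r2 + 1)) (F (r1 + 1))))
        = sc (c 0 - Q * c 1) (sh g (sh (2 * \<sigma>2 * r2) (F (r1 + 1))))"
      by (simp add: sh_sc sh_sh sh_eq sc_diffc)
    also have "\<dots> = sc Q (sh g (sh (2 * \<sigma>2 * r2) (F (r1 + 1))))" unfolding c1 ..
    finally have e: "sh g (sc (c 0) (sh (2 * \<sigma>2 * r2) (F (r1 + 1)))) - sc Q (sc (c 1) (sh (2 + 2 * \<sigma>2 * (r2 + 1)) (F (r1 + 1))))
        = sc Q (sh g (sh (2 * \<sigma>2 * r2) (F (r1 + 1))))" .
    have "r2 = - n" "r2 + 1 \<noteq> - n" using 3 by (auto simp: t_def)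
    moreover have "1 < M" using M 3 unfolding t_def by linarith
    ultimately show ?thesis unfolding s1 s2 using True 3 e by simp
  next
    case 4
    have cS: "Q * c (nat t + 1) = c (nat t)"
    proof -
      have "c (Suc (nat t) - 1) = Q * c (Suc (nat t))" using gcS[OF Q, of "Suc (nat t)"] cc 4 by simp
      then show ?thesis by simp
    qed
    have n1: "nat (t + 1) = nat t + 1" using 4 by simp
    have sh_eq: "g + (2 * t + 2 * \<sigma>2 * r2) = 2 * (t + 1) + 2 * \<sigma>2 * (r2 + 1)" using g by (simp add: algebra_simps)
    have f_eq: "r1 + 1 + t = r1 + (t + 1)" by simp
    have "nat t < M" "nat (t + 1) < M" using M 4 unfolding t_def by linarith+
    have "r2 + 1 \<noteq> - n" "r2 \<noteq> - n" using 4 by (auto simp: t_def)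
    then have "?thesis \<longleftrightarrow> 0 = sh g (sc (c (nat t)) (sh (2 * t + 2 * \<sigma>2 * r2) (F (r1 + 1 + t))))
       - sc Q (sc (c (nat (t + 1))) (sh (2 * (t + 1) + 2 * \<sigma>2 * (r2 + 1)) (F (r1 + (t + 1)))))"
      unfolding s1 s2 using True 4 \<open>nat t < M\<close> \<open>nat (t + 1) < M\<close> by simp
    moreover have "sh g (sc (c (nat t)) (sh (2 * t + 2 * \<sigma>2 * r2) (F (r1 + 1 + t))))
       = sc Q (sc (c (nat (t + 1))) (sh (2 * (t + 1) + 2 * \<sigma>2 * (r2 + 1)) (F (r1 + (t + 1)))))"
      by (simp only: sh_sc sh_sh sh_eq f_eq sc_sc n1 cS)
    ultimately show ?thesis by simp
  qed
qed

lemma crossII_p: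
  fixes G :: "int \<Rightarrow> vec"
  assumes Q: "Q \<noteq> 0" and c: "P \<Longrightarrow> c = gcoef (inverse Q)" and g: "g = 2 - 2 * \<sigma>1"
    and M: "- n - r1 < int M"
  shows "sc Q (sh g (\<Sum>a<M. sc (c a) (if P \<and> r1 + 1 = - (n + 1 * int a) then sh (2 * int a + 2 * \<sigma>1 * (r1 + 1)) (G (r2 - 1 * int a)) else 0)))
      - (\<Sum>a<M. sc (c a) (if P \<and> r1 = - (n + 1 * int a) then sh (2 * int a + 2 * \<sigma>1 * r1) (G (r2 + 1 - 1 * int a)) else 0))
   = sh g (if P \<and> r1 + 1 = - n then sh (2 * \<sigma>1 * (r1 + 1)) (G r2) else 0)
     - sc Q (if P \<and> r1 = - n then sh (2 * \<sigma>1 * r1) (G (r2 + 1)) else 0)"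
proof (cases P)
  case False then show ?thesis by simp
next
  case True
  note cc = c[OF True]
  define t where "t = - n - r1"
  have s1: "(\<Sum>a<M. sc (c a) (if P \<and> r1 + 1 = - (n + 1 * int a) then sh (2 * int a + 2 * \<sigma>1 * (r1 + 1)) (G (r2 - 1 * int a)) else 0))
     = (if P \<and> 0 \<le> t - 1 \<and> nat (t - 1) < M then sc (c (nat (t - 1))) (sh (2 * int (nat (t - 1)) + 2 * \<sigma>1 * (r1 + 1)) (G (r2 - int (nat (t - 1))))) else 0)"
  proof -
    have "(\<Sum>a<M. sc (c a) (if P \<and> r1 + 1 = - (n + 1 * int a) then sh (2 * int a + 2 * \<sigma>1 * (r1 + 1)) (G (r2 - 1 * int a)) else 0))
      = (\<Sum>a<M. sc (c a) (if P \<and> int a = t - 1 then sh (2 * int a + 2 * \<sigma>1 * (r1 + 1)) (G (r2 - int a)) else 0))"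
      by (rule sum.cong) (auto simp: t_def algebra_simps)
    then show ?thesis by (simp only: sum_collapse)
  qed
  have s2: "(\<Sum>a<M. sc (c a) (if P \<and> r1 = - (n + 1 * int a) then sh (2 * int a + 2 * \<sigma>1 * r1) (G (r2 + 1 - 1 * int a)) else 0))
     = (if P \<and> 0 \<le> t \<and> nat t < M then sc (c (nat t)) (sh (2 * int (nat t) + 2 * \<sigma>1 * r1) (G (r2 + 1 - int (nat t)))) else 0)"
  proof -
    have "(\<Sum>a<M. sc (c a) (if P \<and> r1 = - (n + 1 * int a) then sh (2 * int a + 2 * \<sigma>1 * r1) (G (r2 + 1 - 1 * int a)) else 0))
      = (\<Sum>a<M. sc (c a) (if P \<and> int a = t then sh (2 * int a + 2 * \<sigma>1 * r1) (G (r2 + 1 - int a)) else 0))"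
      by (rule sum.cong) (auto simp: t_def algebra_simps)
    then show ?thesis by (simp only: sum_collapse)
  qed
  have Qi: "inverse Q \<noteq> 0" using Q by simp
  consider "t < 0" | "t = 0" | "t = 1" | "t \<ge> 2" by linarith
  then show ?thesis
  proof cases
    case 1
    then show ?thesis unfolding s1 s2 using True by (simp add: t_def)
  next
    case 2
    have "c 0 = Q" using gc0[OF Qi] cc by simp
    moreover have "r1 = - n" "r1 + 1 \<noteq> - n" using 2 by (auto simp: t_def)
    moreover have "0 < M" using M 2 unfolding t_def by linarith
    ultimately show ?thesis unfolding s1 s2 using True 2 by simp
  next
    case 3
    have c1: "Q * c 0 - c 1 = 1"
    proof -
      have "c 0 - inverse Q * c 1 = inverse Q" using gc1[OF Qi] cc by simp
      then have "Q * (c 0 - inverse Q * c 1) = Q * inverse Q" by simp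
      then show ?thesis using Q by (simp add: algebra_simps)
    qed
    have sh_eq: "g + 2 * \<sigma>1 * (r1 + 1) = 2 + 2 * \<sigma>1 * r1" using g by (simp add: algebra_simps)
    have "sc Q (sh g (sc (c 0) (sh (2 * \<sigma>1 * (r1 + 1)) (G r2)))) - sc (c 1) (sh (2 + 2 * \<sigma>1 * r1) (G r2))
        = sc (Q * c 0 - c 1) (sh (2 + 2 * \<sigma>1 * r1) (G r2))"
      by (simp add: sh_sc sh_sh sh_eq sc_diffc)
    also have "\<dots> = sh g (sh (2 * \<sigma>1 * (r1 + 1)) (G r2))" unfolding c1 by (simp add: sh_sh sh_eq)
    finally have e: "sc Q (sh g (sc (c 0) (sh (2 * \<sigma>1 * (r1 + 1)) (G r2)))) - sc (c 1) (sh (2 + 2 * \<sigma>1 * r1) (G r2))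
        = sh g (sh (2 * \<sigma>1 * (r1 + 1)) (G r2))" .
    have "r1 + 1 = - n" "r1 \<noteq> - n" using 3 by (auto simp: t_def)
    moreover have "1 < M" using M 3 unfolding t_def by linarith
    ultimately show ?thesis unfolding s1 s2 using True 3 e by simp
  next
    case 4
    have cS: "Q * c (nat t - 1) = c (nat t)"
    proof -
      have "c (nat t - 1) = inverse Q * c (nat t)" using gcS[OF Qi, of "nat t"] cc 4 by simp
      then show ?thesis using Q by simp
    qed
    have n1: "nat (t - 1) = nat t - 1" using 4 by simp
    have sh_eq: "g + (2 * (t - 1) + 2 * \<sigma>1 * (r1 + 1)) = 2 * t + 2 * \<sigma>1 * r1" using g by (simp add: algebra_simps)
    have f_eq: "r2 - (t - 1) = r2 + 1 - t" by simp
    have "nat t < M" "nat (t - 1) < M" using M 4 unfolding t_def by linarith+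
    have "r1 + 1 \<noteq> - n" "r1 \<noteq> - n" using 4 by (auto simp: t_def)
    then have "?thesis \<longleftrightarrow> sc Q (sh g (sc (c (nat (t - 1))) (sh (2 * (t - 1) + 2 * \<sigma>1 * (r1 + 1)) (G (r2 - (t - 1))))))
       - sc (c (nat t)) (sh (2 * t + 2 * \<sigma>1 * r1) (G (r2 + 1 - t))) = 0"
      unfolding s1 s2 using True 4 \<open>nat t < M\<close> \<open>nat (t - 1) < M\<close> by simp
    moreover have "sc Q (sh g (sc (c (nat (t - 1))) (sh (2 * (t - 1) + 2 * \<sigma>1 * (r1 + 1)) (G (r2 - (t - 1))))))
       = sc (c (nat t)) (sh (2 * t + 2 * \<sigma>1 * r1) (G (r2 + 1 - t)))"
      by (simp only: sh_sc sh_sh sh_eq f_eq sc_sc n1 cS)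
    ultimately show ?thesis by simp
  qed
qed

lemma crossII_m:
  fixes G :: "int \<Rightarrow> vec"
  assumes Q: "Q \<noteq> 0" and c: "P \<Longrightarrow> c = gcoef Q" and g: "g = - 2 - 2 * \<sigma>1"
    and M: "n + r1 + 1 < int M"
  shows "sc Q (sh g (\<Sum>a<M. sc (c a) (if P \<and> r1 + 1 = - (n + - 1 * int a) then sh (2 * int a + 2 * \<sigma>1 * (r1 + 1)) (G (r2 - - 1 * int a)) else 0)))
      - (\<Sum>a<M. sc (c a) (if P \<and> r1 = - (n + - 1 * int a) then sh (2 * int a + 2 * \<sigma>1 * r1) (G (r2 + 1 - - 1 * int a)) else 0))
   = sh g (if P \<and> r1 + 1 = - n then sh (2 * \<sigma>1 * (r1 + 1)) (G r2) else 0)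
     - sc Q (if P \<and> r1 = - n then sh (2 * \<sigma>1 * r1) (G (r2 + 1)) else 0)"
proof (cases P)
  case False then show ?thesis by simp
next
  case True
  note cc = c[OF True]
  define t where "t = n + r1"
  have s1: "(\<Sum>a<M. sc (c a) (if P \<and> r1 + 1 = - (n + - 1 * int a) then sh (2 * int a + 2 * \<sigma>1 * (r1 + 1)) (G (r2 - - 1 * int a)) else 0))
     = (if P \<and> 0 \<le> t + 1 \<and> nat (t + 1) < M then sc (c (nat (t + 1))) (sh (2 * int (nat (t + 1)) + 2 * \<sigma>1 * (r1 + 1)) (G (r2 + int (nat (t + 1))))) else 0)"
  proof -
    have "(\<Sum>a<M. sc (c a) (if P \<and> r1 + 1 = - (n + - 1 * int a) then sh (2 * int a + 2 * \<sigma>1 * (r1 + 1)) (G (r2 - - 1 * int a)) else 0))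
      = (\<Sum>a<M. sc (c a) (if P \<and> int a = t + 1 then sh (2 * int a + 2 * \<sigma>1 * (r1 + 1)) (G (r2 + int a)) else 0))"
      by (rule sum.cong) (auto simp: t_def algebra_simps)
    then show ?thesis by (simp only: sum_collapse)
  qed
  have s2: "(\<Sum>a<M. sc (c a) (if P \<and> r1 = - (n + - 1 * int a) then sh (2 * int a + 2 * \<sigma>1 * r1) (G (r2 + 1 - - 1 * int a)) else 0))
     = (if P \<and> 0 \<le> t \<and> nat t < M then sc (c (nat t)) (sh (2 * int (nat t) + 2 * \<sigma>1 * r1) (G (r2 + 1 + int (nat t)))) else 0)"
  proof -
    have "(\<Sum>a<M. sc (c a) (if P \<and> r1 = - (n + - 1 * int a) then sh (2 * int a + 2 * \<sigma>1 * r1) (G (r2 + 1 - - 1 * int a)) else 0))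
      = (\<Sum>a<M. sc (c a) (if P \<and> int a = t then sh (2 * int a + 2 * \<sigma>1 * r1) (G (r2 + 1 + int a)) else 0))"
      by (rule sum.cong) (auto simp: t_def algebra_simps)
    then show ?thesis by (simp only: sum_collapse)
  qed
  consider "t < -1" | "t = -1" | "t = 0" | "t \<ge> 1" by linarith
  then show ?thesis
  proof cases
    case 1
    then show ?thesis unfolding s1 s2 using True by (simp add: t_def)
  next
    case 2
    have "c 0 = inverse Q" using gc0[OF Q] cc by simp
    then have e: "sc Q (sh g (sc (c 0) v)) = sh g v" for v using Q by (simp add: sh_sc)
    have sh_eq: "2 * \<sigma>1 * (r1 + 1) = 2 * \<sigma>1 * (r1 + 1)" ..
    have "r1 + 1 = - n" "r1 \<noteq> - n" using 2 by (auto simp: t_def)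
    moreover have "0 < M" using M 2 unfolding t_def by linarith
    ultimately show ?thesis unfolding s1 s2 using True 2 e by simp
  next
    case 3
    have c1: "Q * c 1 - c 0 = - Q"
    proof -
      have "c 0 - Q * c 1 = Q" using gc1[OF Q] cc by simp
      then show ?thesis by (metis minus_diff_eq)
    qed
    have sh_eq: "g + (2 + 2 * \<sigma>1 * (r1 + 1)) = 2 * \<sigma>1 * r1" using g by (simp add: algebra_simps)
    have "sc Q (sh g (sc (c 1) (sh (2 + 2 * \<sigma>1 * (r1 + 1)) (G (r2 + 1))))) - sc (c 0) (sh (2 * \<sigma>1 * r1) (G (r2 + 1)))
        = sc (Q * c 1 - c 0) (sh (2 * \<sigma>1 * r1) (G (r2 + 1)))"
      by (simp add: sh_sc sh_sh sh_eq sc_diffc)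
    also have "\<dots> = - sc Q (sh (2 * \<sigma>1 * r1) (G (r2 + 1)))" unfolding c1 by (rule poly_mapping_eqI) simp
    finally have e: "sc Q (sh g (sc (c 1) (sh (2 + 2 * \<sigma>1 * (r1 + 1)) (G (r2 + 1))))) - sc (c 0) (sh (2 * \<sigma>1 * r1) (G (r2 + 1)))
        = - sc Q (sh (2 * \<sigma>1 * r1) (G (r2 + 1)))" .
    have "r1 = - n" "r1 + 1 \<noteq> - n" using 3 by (auto simp: t_def)
    moreover have "1 < M" using M 3 unfolding t_def by linarith
    ultimately show ?thesis unfolding s1 s2 using True 3 e by simp
  next
    case 4
    have cS: "Q * c (nat t + 1) = c (nat t)"
    proof -
      have "c (Suc (nat t) - 1) = Q * c (Suc (nat t))" using gcS[OF Q, of "Suc (nat t)"] cc 4 by simp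
      then show ?thesis by simp
    qed
    have n1: "nat (t + 1) = nat t + 1" using 4 by simp
    have sh_eq: "g + (2 * (t + 1) + 2 * \<sigma>1 * (r1 + 1)) = 2 * t + 2 * \<sigma>1 * r1" using g by (simp add: algebra_simps)
    have f_eq: "r2 + (t + 1) = r2 + 1 + t" by simp
    have "nat t < M" "nat (t + 1) < M" using M 4 unfolding t_def by linarith+
    have "r1 + 1 \<noteq> - n" "r1 \<noteq> - n" using 4 by (auto simp: t_def)
    then have "?thesis \<longleftrightarrow> sc Q (sh g (sc (c (nat (t + 1))) (sh (2 * (t + 1) + 2 * \<sigma>1 * (r1 + 1)) (G (r2 + (t + 1))))))
       - sc (c (nat t)) (sh (2 * t + 2 * \<sigma>1 * r1) (G (r2 + 1 + t))) = 0"
      unfolding s1 s2 using True 4 \<open>nat t < M\<close> \<open>nat (t + 1) < M\<close> by simp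
    moreover have "sc Q (sh g (sc (c (nat (t + 1))) (sh (2 * (t + 1) + 2 * \<sigma>1 * (r1 + 1)) (G (r2 + (t + 1))))))
       = sc (c (nat t)) (sh (2 * t + 2 * \<sigma>1 * r1) (G (r2 + 1 + t)))"
      by (simp only: sh_sc sh_sh sh_eq f_eq sc_sc n1 cS)
    ultimately show ?thesis by simp
  qed
qed


lemma crossI:
  fixes F :: "int \<Rightarrow> vec"
  assumes sg1: "\<sigma>1 = 1 \<or> \<sigma>1 = -1" and Qb: "Q = qpow b" and c: "P \<Longrightarrow> c = gcoef (qpow (- \<sigma>1 * b))"
    and g: "g = 2 * (\<sigma>2 - \<sigma>1)" and M: "\<bar>n\<bar> + \<bar>r2\<bar> + 1 < int M"
  shows "sc Q (sh g (if P \<and> r2 = - n then sh (2 * \<sigma>2 * r2) (F (r1 + 1)) else 0))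
      - (if P \<and> r2 + 1 = - n then sh (2 * \<sigma>2 * (r2 + 1)) (F r1) else 0)
   = sh g (\<Sum>a<M. sc (c a) (if P \<and> r2 = - (n + \<sigma>1 * int a) then sh (2 * int a + 2 * \<sigma>2 * r2) (F (r1 + 1 - \<sigma>1 * int a)) else 0))
     - sc Q (\<Sum>a<M. sc (c a) (if P \<and> r2 + 1 = - (n + \<sigma>1 * int a) then sh (2 * int a + 2 * \<sigma>2 * (r2 + 1)) (F (r1 - \<sigma>1 * int a)) else 0))"
  using sg1
proof
  assume s: "\<sigma>1 = 1"
  show ?thesis unfolding s
    by (rule crossI_p) (use Qb c g M s in \<open>auto simp: qpow_neg\<close>)
next
  assume s: "\<sigma>1 = -1"
  show ?thesis unfolding s
    by (rule crossI_m) (use Qb c g M s in auto)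
qed

lemma crossII:
  fixes G :: "int \<Rightarrow> vec"
  assumes sg2: "\<sigma>2 = 1 \<or> \<sigma>2 = -1" and Qb: "Q = qpow b" and c: "P \<Longrightarrow> c = gcoef (qpow (- \<sigma>2 * b))"
    and g: "g = 2 * (\<sigma>2 - \<sigma>1)" and M: "\<bar>n\<bar> + \<bar>r1\<bar> + 1 < int M"
  shows "sc Q (sh g (\<Sum>a<M. sc (c a) (if P \<and> r1 + 1 = - (n + \<sigma>2 * int a) then sh (2 * int a + 2 * \<sigma>1 * (r1 + 1)) (G (r2 - \<sigma>2 * int a)) else 0)))
      - (\<Sum>a<M. sc (c a) (if P \<and> r1 = - (n + \<sigma>2 * int a) then sh (2 * int a + 2 * \<sigma>1 * r1) (G (r2 + 1 - \<sigma>2 * int a)) else 0))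
   = sh g (if P \<and> r1 + 1 = - n then sh (2 * \<sigma>1 * (r1 + 1)) (G r2) else 0)
     - sc Q (if P \<and> r1 = - n then sh (2 * \<sigma>1 * r1) (G (r2 + 1)) else 0)"
  using sg2
proof
  assume s: "\<sigma>2 = 1"
  show ?thesis unfolding s
    by (rule crossII_p) (use Qb c g M s in \<open>auto simp: qpow_neg\<close>)
next
  assume s: "\<sigma>2 = -1"
  show ?thesis unfolding s
    by (rule crossII_m) (use Qb c g M s in auto)
qed

lemma abel3:
  fixes X1 X2 X3 Y1 Y2 Y3 Z1 Z2 Z3 W1 W2 W3 :: "'a::ab_group_add"
  assumes "X1 - Y1 = Z2 - W2" "X2 - Y2 = Z1 - W1" "X3 - Y3 = Z3 - W3"
  shows "(X1 + X2 + X3) - (Y1 + Y2 + Y3) = (Z1 + Z2 + Z3) - (W1 + W2 + W3)"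
proof -
  have "(X1 + X2 + X3) - (Y1 + Y2 + Y3) = (X1 - Y1) + (X2 - Y2) + (X3 - Y3)" by (simp add: algebra_simps)
  also have "\<dots> = (Z2 - W2) + (Z1 - W1) + (Z3 - W3)" using assms by simp
  also have "\<dots> = (Z1 + Z2 + Z3) - (W1 + W2 + W3)" by (simp add: algebra_simps)
  finally show ?thesis .
qed

lemma sh_px_comm: "sh g (px i n d v) = px i n d (sh g v)"
  by (simp add: sh_px px_sh add.commute)

lemma T3_comb:
  "sc Q (sh g (\<Sum>a<M. \<Sum>b<M. sc (c a b) (px i (N a b) (D a b) (X a b))))
   - (\<Sum>a<M. \<Sum>b<M. sc (c a b) (px i (N a b) (D a b) (Y a b)))
   = (\<Sum>a<M. \<Sum>b<M. sc (c a b) (px i (N a b) (D a b) (sc Q (sh g (X a b)) - Y a b)))"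
  by (simp add: sh_sum sc_sum sh_sc sh_px_comm px_diff px_sc sc_diff sum_subtractf mult.commute)


lemma T3_comb2:
  "sh g (\<Sum>a<M. \<Sum>b<M. sc (c a b) (px i (N a b) (D a b) (X a b)))
   - sc Q (\<Sum>a<M. \<Sum>b<M. sc (c a b) (px i (N a b) (D a b) (Y a b)))
   = (\<Sum>a<M. \<Sum>b<M. sc (c a b) (px i (N a b) (D a b) (sh g (X a b) - sc Q (Y a b))))"
  by (simp add: sh_sum sc_sum sh_sc sh_px_comm px_diff px_sc sc_diff sum_subtractf mult.commute)

lemma Om_Nil [simp]: "Om \<sigma> B i r (sg (e, []) c) = 0"
  by (simp add: Om_def ompb_def)

lemma quad_basis:
  assumes sg1: "\<sigma>1 = 1 \<or> \<sigma>1 = -1" and sg2: "\<sigma>2 = 1 \<or> \<sigma>2 = -1"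
    and g: "g = 2 * (\<sigma>2 - \<sigma>1)" and Qb: "Q = qpow (B j k)" and Bs: "B k j = B j k"
  shows "\<forall>e r1 r2. sc Q (sh g (Om \<sigma>1 B j (r1 + 1) (Om \<sigma>2 B k r2 (sg (e, xs) 1))))
      - Om \<sigma>1 B j r1 (Om \<sigma>2 B k (r2 + 1) (sg (e, xs) 1))
    = sh g (Om \<sigma>2 B k r2 (Om \<sigma>1 B j (r1 + 1) (sg (e, xs) 1)))
      - sc Q (Om \<sigma>2 B k (r2 + 1) (Om \<sigma>1 B j r1 (sg (e, xs) 1)))"
proof (induction xs)
  case Nil
  show ?case by simp
next
  case (Cons x ys)
  obtain i n where x: "x = (i, n)" by (cases x)
  show ?case
  proof (intro allI)
    fix e r1 r2 :: int
    let ?Y = "sg (e, ys) (1::F)"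
    have v: "sg (e, x # ys) 1 = px i n 0 ?Y" by (simp add: x)
    let ?c1 = "\<lambda>a. gcoef (qpow (- \<sigma>1 * B j i)) a"
    let ?c2 = "\<lambda>a. gcoef (qpow (- \<sigma>2 * B k i)) a"
    obtain K1 where K1: "\<forall>M\<ge>K1. Om \<sigma>1 B j (r1 + 1) (Om \<sigma>2 B k r2 (px i n 0 ?Y)) =
   (if i = k \<and> r2 = - n then sh (2 * \<sigma>2 * r2) (Om \<sigma>1 B j (r1 + 1) ?Y) else 0)
   + (\<Sum>a<M. sc (?c2 a)
        (if i = j \<and> r1 + 1 = - (n + \<sigma>2 * int a) then sh (2 * int a + 2 * \<sigma>1 * (r1 + 1)) (Om \<sigma>2 B k (r2 - \<sigma>2 * int a) ?Y) else 0))
   + (\<Sum>a<M. \<Sum>b<M. sc (?c2 a * ?c1 b)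
        (px i (n + \<sigma>2 * int a + \<sigma>1 * int b) (2 * int a + 2 * int b)
           (Om \<sigma>1 B j (r1 + 1 - \<sigma>1 * int b) (Om \<sigma>2 B k (r2 - \<sigma>2 * int a) ?Y))))"
      using expand2[OF sg1 sg2, of B j "r1 + 1" k r2 i n ?Y] by blast
    obtain K2 where K2: "\<forall>M\<ge>K2. Om \<sigma>1 B j r1 (Om \<sigma>2 B k (r2 + 1) (px i n 0 ?Y)) =
   (if i = k \<and> r2 + 1 = - n then sh (2 * \<sigma>2 * (r2 + 1)) (Om \<sigma>1 B j r1 ?Y) else 0)
   + (\<Sum>a<M. sc (?c2 a)
        (if i = j \<and> r1 = - (n + \<sigma>2 * int a) then sh (2 * int a + 2 * \<sigma>1 * r1) (Om \<sigma>2 B k (r2 + 1 - \<sigma>2 * int a) ?Y) else 0))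
   + (\<Sum>a<M. \<Sum>b<M. sc (?c2 a * ?c1 b)
        (px i (n + \<sigma>2 * int a + \<sigma>1 * int b) (2 * int a + 2 * int b)
           (Om \<sigma>1 B j (r1 - \<sigma>1 * int b) (Om \<sigma>2 B k (r2 + 1 - \<sigma>2 * int a) ?Y))))"
      using expand2[OF sg1 sg2, of B j r1 k "r2 + 1" i n ?Y] by blast
    obtain K3 where K3: "\<forall>M\<ge>K3. Om \<sigma>2 B k r2 (Om \<sigma>1 B j (r1 + 1) (px i n 0 ?Y)) =
   (if i = j \<and> r1 + 1 = - n then sh (2 * \<sigma>1 * (r1 + 1)) (Om \<sigma>2 B k r2 ?Y) else 0)
   + (\<Sum>a<M. sc (?c1 a)
        (if i = k \<and> r2 = - (n + \<sigma>1 * int a) then sh (2 * int a + 2 * \<sigma>2 * r2) (Om \<sigma>1 B j (r1 + 1 - \<sigma>1 * int a) ?Y) else 0))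
   + (\<Sum>a<M. \<Sum>b<M. sc (?c1 a * ?c2 b)
        (px i (n + \<sigma>1 * int a + \<sigma>2 * int b) (2 * int a + 2 * int b)
           (Om \<sigma>2 B k (r2 - \<sigma>2 * int b) (Om \<sigma>1 B j (r1 + 1 - \<sigma>1 * int a) ?Y))))"
      using expand2[OF sg2 sg1, of B k r2 j "r1 + 1" i n ?Y] by blast
    obtain K4 where K4: "\<forall>M\<ge>K4. Om \<sigma>2 B k (r2 + 1) (Om \<sigma>1 B j r1 (px i n 0 ?Y)) =
   (if i = j \<and> r1 = - n then sh (2 * \<sigma>1 * r1) (Om \<sigma>2 B k (r2 + 1) ?Y) else 0)
   + (\<Sum>a<M. sc (?c1 a)
        (if i = k \<and> r2 + 1 = - (n + \<sigma>1 * int a) then sh (2 * int a + 2 * \<sigma>2 * (r2 + 1)) (Om \<sigma>1 B j (r1 - \<sigma>1 * int a) ?Y) else 0))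
   + (\<Sum>a<M. \<Sum>b<M. sc (?c1 a * ?c2 b)
        (px i (n + \<sigma>1 * int a + \<sigma>2 * int b) (2 * int a + 2 * int b)
           (Om \<sigma>2 B k (r2 + 1 - \<sigma>2 * int b) (Om \<sigma>1 B j (r1 - \<sigma>1 * int a) ?Y))))"
      using expand2[OF sg2 sg1, of B k "r2 + 1" j r1 i n ?Y] by blast
    define M where "M = K1 + K2 + K3 + K4 + nat (\<bar>n\<bar> + \<bar>r1\<bar> + \<bar>r2\<bar>) + 2"
    have MK: "K1 \<le> M" "K2 \<le> M" "K3 \<le> M" "K4 \<le> M" unfolding M_def by linarith+
    have MM: "\<bar>n\<bar> + \<bar>r2\<bar> + 1 < int M" "\<bar>n\<bar> + \<bar>r1\<bar> + 1 < int M" unfolding M_def by linarith+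
    have cI: "sc Q (sh g (if i = k \<and> r2 = - n then sh (2 * \<sigma>2 * r2) (Om \<sigma>1 B j (r1 + 1) ?Y) else 0))
      - (if i = k \<and> r2 + 1 = - n then sh (2 * \<sigma>2 * (r2 + 1)) (Om \<sigma>1 B j r1 ?Y) else 0)
     = sh g (\<Sum>a<M. sc (?c1 a)
        (if i = k \<and> r2 = - (n + \<sigma>1 * int a) then sh (2 * int a + 2 * \<sigma>2 * r2) (Om \<sigma>1 B j (r1 + 1 - \<sigma>1 * int a) ?Y) else 0))
      - sc Q (\<Sum>a<M. sc (?c1 a)
        (if i = k \<and> r2 + 1 = - (n + \<sigma>1 * int a) then sh (2 * int a + 2 * \<sigma>2 * (r2 + 1)) (Om \<sigma>1 B j (r1 - \<sigma>1 * int a) ?Y) else 0))"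
      by (rule crossI[OF sg1 Qb _ g MM(1), where F = "\<lambda>s. Om \<sigma>1 B j s ?Y"]) simp
    have cII: "sc Q (sh g (\<Sum>a<M. sc (?c2 a)
        (if i = j \<and> r1 + 1 = - (n + \<sigma>2 * int a) then sh (2 * int a + 2 * \<sigma>1 * (r1 + 1)) (Om \<sigma>2 B k (r2 - \<sigma>2 * int a) ?Y) else 0)))
      - (\<Sum>a<M. sc (?c2 a)
        (if i = j \<and> r1 = - (n + \<sigma>2 * int a) then sh (2 * int a + 2 * \<sigma>1 * r1) (Om \<sigma>2 B k (r2 + 1 - \<sigma>2 * int a) ?Y) else 0))
     = sh g (if i = j \<and> r1 + 1 = - n then sh (2 * \<sigma>1 * (r1 + 1)) (Om \<sigma>2 B k r2 ?Y) else 0)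
      - sc Q (if i = j \<and> r1 = - n then sh (2 * \<sigma>1 * r1) (Om \<sigma>2 B k (r2 + 1) ?Y) else 0)"
      by (rule crossII[OF sg2 Qb _ g MM(2), where G = "\<lambda>s. Om \<sigma>2 B k s ?Y"]) (simp add: Bs)
    have IHab: "sc Q (sh g (Om \<sigma>1 B j (r1 + 1 - \<sigma>1 * int b) (Om \<sigma>2 B k (r2 - \<sigma>2 * int a) ?Y)))
       - Om \<sigma>1 B j (r1 - \<sigma>1 * int b) (Om \<sigma>2 B k (r2 + 1 - \<sigma>2 * int a) ?Y)
     = sh g (Om \<sigma>2 B k (r2 - \<sigma>2 * int a) (Om \<sigma>1 B j (r1 + 1 - \<sigma>1 * int b) ?Y))
       - sc Q (Om \<sigma>2 B k (r2 + 1 - \<sigma>2 * int a) (Om \<sigma>1 B j (r1 - \<sigma>1 * int b) ?Y))" for a b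
    proof -
      have e1: "r1 - \<sigma>1 * int b + 1 = r1 + 1 - \<sigma>1 * int b" by simp
      have e2: "r2 - \<sigma>2 * int a + 1 = r2 + 1 - \<sigma>2 * int a" by simp
      show ?thesis using Cons.IH[THEN spec[where x = e], THEN spec[where x = "r1 - \<sigma>1 * int b"], THEN spec[where x = "r2 - \<sigma>2 * int a"]] unfolding e1 e2 .
    qed
    have cIII: "sc Q (sh g (\<Sum>a<M. \<Sum>b<M. sc (?c2 a * ?c1 b)
        (px i (n + \<sigma>2 * int a + \<sigma>1 * int b) (2 * int a + 2 * int b)
           (Om \<sigma>1 B j (r1 + 1 - \<sigma>1 * int b) (Om \<sigma>2 B k (r2 - \<sigma>2 * int a) ?Y)))))
      - (\<Sum>a<M. \<Sum>b<M. sc (?c2 a * ?c1 b)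
        (px i (n + \<sigma>2 * int a + \<sigma>1 * int b) (2 * int a + 2 * int b)
           (Om \<sigma>1 B j (r1 - \<sigma>1 * int b) (Om \<sigma>2 B k (r2 + 1 - \<sigma>2 * int a) ?Y))))
     = sh g (\<Sum>a<M. \<Sum>b<M. sc (?c1 a * ?c2 b)
        (px i (n + \<sigma>1 * int a + \<sigma>2 * int b) (2 * int a + 2 * int b)
           (Om \<sigma>2 B k (r2 - \<sigma>2 * int b) (Om \<sigma>1 B j (r1 + 1 - \<sigma>1 * int a) ?Y))))
      - sc Q (\<Sum>a<M. \<Sum>b<M. sc (?c1 a * ?c2 b)
        (px i (n + \<sigma>1 * int a + \<sigma>2 * int b) (2 * int a + 2 * int b)
           (Om \<sigma>2 B k (r2 + 1 - \<sigma>2 * int b) (Om \<sigma>1 B j (r1 - \<sigma>1 * int a) ?Y))))"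
      (is "?L = ?R")
    proof -
      have "?L = (\<Sum>a<M. \<Sum>b<M. sc (?c2 a * ?c1 b) (px i (n + \<sigma>2 * int a + \<sigma>1 * int b) (2 * int a + 2 * int b)
          (sh g (Om \<sigma>2 B k (r2 - \<sigma>2 * int a) (Om \<sigma>1 B j (r1 + 1 - \<sigma>1 * int b) ?Y))
           - sc Q (Om \<sigma>2 B k (r2 + 1 - \<sigma>2 * int a) (Om \<sigma>1 B j (r1 - \<sigma>1 * int b) ?Y)))))"
        unfolding T3_comb IHab ..
      also have "\<dots> = (\<Sum>b<M. \<Sum>a<M. sc (?c2 a * ?c1 b) (px i (n + \<sigma>2 * int a + \<sigma>1 * int b) (2 * int a + 2 * int b)
          (sh g (Om \<sigma>2 B k (r2 - \<sigma>2 * int a) (Om \<sigma>1 B j (r1 + 1 - \<sigma>1 * int b) ?Y))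
           - sc Q (Om \<sigma>2 B k (r2 + 1 - \<sigma>2 * int a) (Om \<sigma>1 B j (r1 - \<sigma>1 * int b) ?Y)))))"
        by (rule sum.swap)
      also have "\<dots> = ?R"
        unfolding T3_comb2
        by (intro sum.cong refl) (simp add: mult.commute add.commute add.left_commute)
      finally show ?thesis .
    qed
    show "sc Q (sh g (Om \<sigma>1 B j (r1 + 1) (Om \<sigma>2 B k r2 (sg (e, x # ys) 1))))
      - Om \<sigma>1 B j r1 (Om \<sigma>2 B k (r2 + 1) (sg (e, x # ys) 1))
    = sh g (Om \<sigma>2 B k r2 (Om \<sigma>1 B j (r1 + 1) (sg (e, x # ys) 1)))
      - sc Q (Om \<sigma>2 B k (r2 + 1) (Om \<sigma>1 B j r1 (sg (e, x # ys) 1)))"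
      unfolding v K1[rule_format, OF MK(1)] K2[rule_format, OF MK(2)] K3[rule_format, OF MK(3)] K4[rule_format, OF MK(4)]
        sh_add sc_add
      by (rule abel3[OF cI cII cIII])
  qed
qed


lemma Om_lin: "Om \<sigma> B i r v = ext (\<lambda>k. Om \<sigma> B i r (sg k 1)) v"
  by (simp add: Om_def)

lemma Om_ext: "Om \<sigma> B i r (ext f v) = ext (\<lambda>k. Om \<sigma> B i r (f k)) v"
  unfolding Om_def by (rule ext_ext)

lemma sh_ext2: "sh g (ext f v) = ext (\<lambda>k. sh g (f k)) v"
  unfolding sh_def by (rule ext_ext)

lemma sc_ext: "sc Q (ext f v) = ext (\<lambda>k. sc Q (f k)) v"
  by (simp add: ext_def sc_sum mult.commute)

lemma ext_minus: "ext f v - ext h v = ext (\<lambda>k. f k - h k) v"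
  by (simp add: ext_def sc_diff sum_subtractf)

lemma OmOm_lin: "Om \<sigma>1 B j s1 (Om \<sigma>2 B k s2 v) = ext (\<lambda>kk. Om \<sigma>1 B j s1 (Om \<sigma>2 B k s2 (sg kk 1))) v"
  by (subst Om_lin[of \<sigma>2]) (rule Om_ext)

lemma quad_vec:
  assumes sg1: "\<sigma>1 = 1 \<or> \<sigma>1 = -1" and sg2: "\<sigma>2 = 1 \<or> \<sigma>2 = -1"
    and g: "g = 2 * (\<sigma>2 - \<sigma>1)" and Qb: "Q = qpow (B j k)" and Bs: "B k j = B j k"
  shows "sc Q (sh g (Om \<sigma>1 B j (r1 + 1) (Om \<sigma>2 B k r2 v))) - Om \<sigma>1 B j r1 (Om \<sigma>2 B k (r2 + 1) v)
    = sh g (Om \<sigma>2 B k r2 (Om \<sigma>1 B j (r1 + 1) v)) - sc Q (Om \<sigma>2 B k (r2 + 1) (Om \<sigma>1 B j r1 v))"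
proof -
  have b: "sc Q (sh g (Om \<sigma>1 B j (r1 + 1) (Om \<sigma>2 B k r2 (sg kk 1)))) - Om \<sigma>1 B j r1 (Om \<sigma>2 B k (r2 + 1) (sg kk 1))
    = sh g (Om \<sigma>2 B k r2 (Om \<sigma>1 B j (r1 + 1) (sg kk 1))) - sc Q (Om \<sigma>2 B k (r2 + 1) (Om \<sigma>1 B j r1 (sg kk 1)))" for kk
  proof -
    obtain e xs where kk: "kk = (e, xs)" by (cases kk)
    show ?thesis unfolding kk using quad_basis[of \<sigma>1 \<sigma>2 g Q B j k xs, OF sg1 sg2 g Qb Bs] by blast
  qed
  show ?thesis
    unfolding OmOm_lin[of \<sigma>1 B j _ \<sigma>2 k _ v] OmOm_lin[of \<sigma>2 B k _ \<sigma>1 j _ v]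
      sh_ext2 sc_ext ext_minus b ..
qed

lemma fin_OmG:
  assumes X: "fin X" shows "fin (OmG \<sigma> B i r X)"
  unfolding OmG_def linext_def
  by (rule fin_fsum) (insert X, auto simp: fin_def[of X] intro!: fin_fsmul fin_fmul fin_omg)

lemma ph_fsmul_g: "good N X \<Longrightarrow> ph (fsmul c X) = sc c (ph X)" by (simp add: ph_fsmul good_fin)
lemma ph_fsub_g: "good N X \<Longrightarrow> good N Y \<Longrightarrow> ph (fsub X Y) = ph X - ph Y" by (simp add: ph_fsub good_fin)
lemma ph_gpow_g: "good N X \<Longrightarrow> ph (fmul (gpow d) X) = sh d (ph X)" by (simp add: ph_gpow good_fin)
lemma ph_OmG_g: "good N X \<Longrightarrow> ph (OmG \<sigma> B i r X) = Om \<sigma> B i r (ph X)" by (simp add: ph_OmG good_fin)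

lemma rel345:
  assumes sg1: "\<sigma>1 = 1 \<or> \<sigma>1 = -1" and sg2: "\<sigma>2 = 1 \<or> \<sigma>2 = -1"
    and g: "g = 2 * (\<sigma>2 - \<sigma>1)" and Qb: "Q = qpow (B j k)" and Bs: "B k j = B j k"
    and P: "good N P"
  shows "ueq N B
    (fsub (fsmul Q (fmul (gpow g) (OmG \<sigma>1 B j (r1 + 1) (OmG \<sigma>2 B k r2 P)))) (OmG \<sigma>1 B j r1 (OmG \<sigma>2 B k (r2 + 1) P)))
    (fsub (fmul (gpow g) (OmG \<sigma>2 B k r2 (OmG \<sigma>1 B j (r1 + 1) P))) (fsmul Q (OmG \<sigma>2 B k (r2 + 1) (OmG \<sigma>1 B j r1 P))))"
proof (rule ueq_ph)
  have gO: "good N (OmG \<sigma> B i r X)" if "good N X" for \<sigma> i r X using that by (rule good_OmG)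
  note gs = gO gO[OF gO[OF P]] good_fmul good_gpow good_fsmul good_fsub P
  show "good N (fsub (fsmul Q (fmul (gpow g) (OmG \<sigma>1 B j (r1 + 1) (OmG \<sigma>2 B k r2 P)))) (OmG \<sigma>1 B j r1 (OmG \<sigma>2 B k (r2 + 1) P)))"
    by (intro good_fsub good_fsmul good_fmul good_gpow gO P)
  show "good N (fsub (fmul (gpow g) (OmG \<sigma>2 B k r2 (OmG \<sigma>1 B j (r1 + 1) P))) (fsmul Q (OmG \<sigma>2 B k (r2 + 1) (OmG \<sigma>1 B j r1 P))))"
    by (intro good_fsub good_fsmul good_fmul good_gpow gO P)
  have g1: "good N (OmG \<sigma>2 B k s P)" "good N (OmG \<sigma>1 B j s P)" for s using P by (auto intro: gO)
  show "ph (fsub (fsmul Q (fmul (gpow g) (OmG \<sigma>1 B j (r1 + 1) (OmG \<sigma>2 B k r2 P)))) (OmG \<sigma>1 B j r1 (OmG \<sigma>2 B k (r2 + 1) P)))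
      = ph (fsub (fmul (gpow g) (OmG \<sigma>2 B k r2 (OmG \<sigma>1 B j (r1 + 1) P))) (fsmul Q (OmG \<sigma>2 B k (r2 + 1) (OmG \<sigma>1 B j r1 P))))"
    using quad_vec[of \<sigma>1 \<sigma>2 g Q B j k r1 r2 "ph P", OF sg1 sg2 g Qb Bs]
    using P by (simp add: good_fin ph_fsub ph_fsmul ph_gpow ph_OmG fin_OmG fin_fsmul fin_fmul fin_fsub)
qed

lemma simple_sym:
  assumes "simple_form N B" "i \<in> {1..N}" "j \<in> {1..N}"
  shows "B i j = B j i"
proof -
  have "\<forall>i\<in>{1..N}. \<forall>j\<in>{1..N}. B i j = B j i"
    using assms(1) unfolding simple_form_def by (elim conjE) assumption
  then show ?thesis using assms(2,3) by blast
qed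

lemma gpow0: "gpow 0 = fone" by (simp add: gpow_def fpow_def)


lemma final1:
  assumes "simple_form N B" "i \<in> {1..N}" "m \<in> {1..N}" "P \<in> nsub N"
  shows "\<exists>M. (\<forall>a\<ge>M. ueq N B (OmPsi B m (r - int a) P) fzero) \<and>
        ueq N B (OmPsi B m r (fmul (xm i n) P))
          (fadd (if i = m \<and> r = - n then fmul (gpow (2 * r)) P else fzero)
                (fsum (\<lambda>a. fsmul (gcoef (qpow (- B i m)) a)
                        (fprod [gpow (2 * int a), xm i (n + int a), OmPsi B m (r - int a) P])) {..<M}))"
proof -
  have Bs: "B m i = B i m" using simple_sym[OF assms(1,3,2)] .
  have e1: "r - 1 * int a = r - int a" for a by simp
  have e2: "n + 1 * int a = n + int a" for a by simp
  have e3: "2 * 1 * r = 2 * r" by simp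
  have e4: "- 1 * B i m = - B i m" by simp
  show ?thesis
    using rel12[of 1 N P i m B r n] nsub_good[OF assms(4)] assms(2,3) Bs
    unfolding OmPsi_OmG e1 e2 e3 e4 by blast
qed

lemma final2:
  assumes "simple_form N B" "i \<in> {1..N}" "m \<in> {1..N}" "P \<in> nsub N"
  shows "\<exists>M. (\<forall>a\<ge>M. ueq N B (OmPhi B m (r + int a) P) fzero) \<and>
        ueq N B (OmPhi B m r (fmul (xm i n) P))
          (fadd (if i = m \<and> r = - n then fmul (gpow (- 2 * r)) P else fzero)
                (fsum (\<lambda>a. fsmul (gcoef (qpow (B i m)) a)
                        (fprod [gpow (2 * int a), xm i (n - int a), OmPhi B m (r + int a) P])) {..<M}))"
proof -
  have Bs: "B m i = B i m" using simple_sym[OF assms(1,3,2)] .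
  have e1: "r - (- 1) * int a = r + int a" for a by simp
  have e2: "n + (- 1) * int a = n - int a" for a by simp
  have e3: "2 * (- 1) * r = - 2 * r" by simp
  have e4: "- (- 1) * B i m = B i m" by simp
  show ?thesis
    using rel12[of "-1" N P i m B r n] nsub_good[OF assms(4)] assms(2,3) Bs
    unfolding OmPhi_OmG e1 e2 e3 e4 by blast
qed

lemma final3:
  assumes "simple_form N B" "j \<in> {1..N}" "k \<in> {1..N}" "P \<in> nsub N"
  shows "ueq N B
        (fsub (fsmul (qpow (B j k)) (OmPsi B j (r1 + 1) (OmPsi B k r2 P)))
              (OmPsi B j r1 (OmPsi B k (r2 + 1) P)))
        (fsub (OmPsi B k r2 (OmPsi B j (r1 + 1) P))
              (fsmul (qpow (B j k)) (OmPsi B k (r2 + 1) (OmPsi B j r1 P))))"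
proof -
  have Bs: "B k j = B j k" using simple_sym[OF assms(1,3,2)] .
  have "ueq N B
    (fsub (fsmul (qpow (B j k)) (fmul (gpow 0) (OmG 1 B j (r1 + 1) (OmG 1 B k r2 P)))) (OmG 1 B j r1 (OmG 1 B k (r2 + 1) P)))
    (fsub (fmul (gpow 0) (OmG 1 B k r2 (OmG 1 B j (r1 + 1) P))) (fsmul (qpow (B j k)) (OmG 1 B k (r2 + 1) (OmG 1 B j r1 P))))"
    by (rule rel345) (use nsub_good[OF assms(4)] Bs in auto)
  then show ?thesis unfolding OmPsi_OmG gpow0 fmul_fone_left .
qed

lemma final4:
  assumes "simple_form N B" "j \<in> {1..N}" "k \<in> {1..N}" "P \<in> nsub N"
  shows "ueq N B
        (fsub (fsmul (qpow (B j k)) (OmPhi B j (r1 + 1) (OmPhi B k r2 P)))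
              (OmPhi B j r1 (OmPhi B k (r2 + 1) P)))
        (fsub (OmPhi B k r2 (OmPhi B j (r1 + 1) P))
              (fsmul (qpow (B j k)) (OmPhi B k (r2 + 1) (OmPhi B j r1 P))))"
proof -
  have Bs: "B k j = B j k" using simple_sym[OF assms(1,3,2)] .
  have "ueq N B
    (fsub (fsmul (qpow (B j k)) (fmul (gpow 0) (OmG (-1) B j (r1 + 1) (OmG (-1) B k r2 P)))) (OmG (-1) B j r1 (OmG (-1) B k (r2 + 1) P)))
    (fsub (fmul (gpow 0) (OmG (-1) B k r2 (OmG (-1) B j (r1 + 1) P))) (fsmul (qpow (B j k)) (OmG (-1) B k (r2 + 1) (OmG (-1) B j r1 P))))"
    by (rule rel345) (use nsub_good[OF assms(4)] Bs in auto)
  then show ?thesis unfolding OmPhi_OmG gpow0 fmul_fone_left .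
qed

lemma final5:
  assumes "simple_form N B" "j \<in> {1..N}" "k \<in> {1..N}" "P \<in> nsub N"
  shows "ueq N B
        (fsub (fsmul (qpow (B j k)) (fmul (gpow 4) (OmPhi B j (r1 + 1) (OmPsi B k r2 P))))
              (OmPhi B j r1 (OmPsi B k (r2 + 1) P)))
        (fsub (fmul (gpow 4) (OmPsi B k r2 (OmPhi B j (r1 + 1) P)))
              (fsmul (qpow (B j k)) (OmPsi B k (r2 + 1) (OmPhi B j r1 P))))"
proof -
  have Bs: "B k j = B j k" using simple_sym[OF assms(1,3,2)] .
  have "ueq N B
    (fsub (fsmul (qpow (B j k)) (fmul (gpow 4) (OmG (-1) B j (r1 + 1) (OmG 1 B k r2 P)))) (OmG (-1) B j r1 (OmG 1 B k (r2 + 1) P)))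
    (fsub (fmul (gpow 4) (OmG 1 B k r2 (OmG (-1) B j (r1 + 1) P))) (fsmul (qpow (B j k)) (OmG 1 B k (r2 + 1) (OmG (-1) B j r1 P))))"
    by (rule rel345) (use nsub_good[OF assms(4)] Bs in auto)
  then show ?thesis unfolding OmPhi_OmG OmPsi_OmG .
qed


theorem mainTheorem3:
  fixes N :: nat and B :: "nat \<Rightarrow> nat \<Rightarrow> int"
  assumes "simple_form N B"
  shows
   "(\<forall>i\<in>{1..N}. \<forall>m\<in>{1..N}. \<forall>r n :: int. \<forall>P\<in>nsub N.
      \<exists>M. (\<forall>a\<ge>M. ueq N B (OmPsi B m (r - int a) P) fzero) \<and>
        ueq N B (OmPsi B m r (fmul (xm i n) P))
          (fadd (if i = m \<and> r = - n then fmul (gpow (2 * r)) P else fzero)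
                (fsum (\<lambda>a. fsmul (gcoef (qpow (- B i m)) a)
                        (fprod [gpow (2 * int a), xm i (n + int a), OmPsi B m (r - int a) P])) {..<M})))
  \<and> (\<forall>i\<in>{1..N}. \<forall>m\<in>{1..N}. \<forall>r n :: int. \<forall>P\<in>nsub N.
      \<exists>M. (\<forall>a\<ge>M. ueq N B (OmPhi B m (r + int a) P) fzero) \<and>
        ueq N B (OmPhi B m r (fmul (xm i n) P))
          (fadd (if i = m \<and> r = - n then fmul (gpow (- 2 * r)) P else fzero)
                (fsum (\<lambda>a. fsmul (gcoef (qpow (B i m)) a)
                        (fprod [gpow (2 * int a), xm i (n - int a), OmPhi B m (r + int a) P])) {..<M})))
  \<and> (\<forall>j\<in>{1..N}. \<forall>k\<in>{1..N}. \<forall>r1 r2 :: int. \<forall>P\<in>nsub N.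
      ueq N B
        (fsub (fsmul (qpow (B j k)) (OmPsi B j (r1 + 1) (OmPsi B k r2 P)))
              (OmPsi B j r1 (OmPsi B k (r2 + 1) P)))
        (fsub (OmPsi B k r2 (OmPsi B j (r1 + 1) P))
              (fsmul (qpow (B j k)) (OmPsi B k (r2 + 1) (OmPsi B j r1 P)))))
  \<and> (\<forall>j\<in>{1..N}. \<forall>k\<in>{1..N}. \<forall>r1 r2 :: int. \<forall>P\<in>nsub N.
      ueq N B
        (fsub (fsmul (qpow (B j k)) (OmPhi B j (r1 + 1) (OmPhi B k r2 P)))
              (OmPhi B j r1 (OmPhi B k (r2 + 1) P)))
        (fsub (OmPhi B k r2 (OmPhi B j (r1 + 1) P))
              (fsmul (qpow (B j k)) (OmPhi B k (r2 + 1) (OmPhi B j r1 P)))))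
  \<and> (\<forall>j\<in>{1..N}. \<forall>k\<in>{1..N}. \<forall>r1 r2 :: int. \<forall>P\<in>nsub N.
      ueq N B
        (fsub (fsmul (qpow (B j k)) (fmul (gpow 4) (OmPhi B j (r1 + 1) (OmPsi B k r2 P))))
              (OmPhi B j r1 (OmPsi B k (r2 + 1) P)))
        (fsub (fmul (gpow 4) (OmPsi B k r2 (OmPhi B j (r1 + 1) P)))
              (fsmul (qpow (B j k)) (OmPsi B k (r2 + 1) (OmPhi B j r1 P)))))"
  proof (intro conjI ballI allI)
  fix i m r n P assume "i \<in> {1..N}" "m \<in> {1..N}" "P \<in> nsub N"
  then show "\<exists>M. (\<forall>a\<ge>M. ueq N B (OmPsi B m (r - int a) P) fzero) \<and>
        ueq N B (OmPsi B m r (fmul (xm i n) P))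
          (fadd (if i = m \<and> r = - n then fmul (gpow (2 * r)) P else fzero)
                (fsum (\<lambda>a. fsmul (gcoef (qpow (- B i m)) a)
                        (fprod [gpow (2 * int a), xm i (n + int a), OmPsi B m (r - int a) P])) {..<M}))"
    by (rule final1[OF assms])
next
  fix i m r n P assume "i \<in> {1..N}" "m \<in> {1..N}" "P \<in> nsub N"
  then show "\<exists>M. (\<forall>a\<ge>M. ueq N B (OmPhi B m (r + int a) P) fzero) \<and>
        ueq N B (OmPhi B m r (fmul (xm i n) P))
          (fadd (if i = m \<and> r = - n then fmul (gpow (- 2 * r)) P else fzero)
                (fsum (\<lambda>a. fsmul (gcoef (qpow (B i m)) a)
                        (fprod [gpow (2 * int a), xm i (n - int a), OmPhi B m (r + int a) P])) {..<M}))"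
    by (rule final2[OF assms])
next
  fix j k r1 r2 P assume "j \<in> {1..N}" "k \<in> {1..N}" "P \<in> nsub N"
  then show "ueq N B
        (fsub (fsmul (qpow (B j k)) (OmPsi B j (r1 + 1) (OmPsi B k r2 P)))
              (OmPsi B j r1 (OmPsi B k (r2 + 1) P)))
        (fsub (OmPsi B k r2 (OmPsi B j (r1 + 1) P))
              (fsmul (qpow (B j k)) (OmPsi B k (r2 + 1) (OmPsi B j r1 P))))"
    by (rule final3[OF assms])
next
  fix j k r1 r2 P assume "j \<in> {1..N}" "k \<in> {1..N}" "P \<in> nsub N"
  then show "ueq N B
        (fsub (fsmul (qpow (B j k)) (OmPhi B j (r1 + 1) (OmPhi B k r2 P)))
              (OmPhi B j r1 (OmPhi B k (r2 + 1) P)))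
        (fsub (OmPhi B k r2 (OmPhi B j (r1 + 1) P))
              (fsmul (qpow (B j k)) (OmPhi B k (r2 + 1) (OmPhi B j r1 P))))"
    by (rule final4[OF assms])
next
  fix j k r1 r2 P assume "j \<in> {1..N}" "k \<in> {1..N}" "P \<in> nsub N"
  then show "ueq N B
        (fsub (fsmul (qpow (B j k)) (fmul (gpow 4) (OmPhi B j (r1 + 1) (OmPsi B k r2 P))))
              (OmPhi B j r1 (OmPsi B k (r2 + 1) P)))
        (fsub (fmul (gpow 4) (OmPsi B k r2 (OmPhi B j (r1 + 1) P)))
              (fsmul (qpow (B j k)) (OmPsi B k (r2 + 1) (OmPhi B j r1 P))))"
    by (rule final5[OF assms])
qed

end
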